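(* Let $G$ and $H$ be graphs, each with at least $2$ vertices. The direct product $G\times H$ is $1$-perfectly orientable if and only if one of the following holds: (i) $G$ is a $1$-linear forest and $H$ is arbitrary, or vice versa; (ii) $G$ is a $2$-linear forest and $H$ is a pseudoforest, or vice versa; (iii) $G$ is a $3$-linear forest and $H$ is a $4$-linear forest, or vice versa.
   Context: All graphs are finite and simple. An orientation of a graph $G$ is $1$-perfect if the out-neighborhood of every vertex induces a clique in $G$; $G$ is $1$-perfectly orientable if it admits a $1$-perfect orientation. The direct product $G\times H$ has vertex set $V(G)\times V(H)$, with $(u,v),(u',v')$ adjacent iff $uu'\in E(G)$ and $vv'\in E(H)$. For a positive integer $k$, a $k$-linear forest is a disjoint union of paths each having at most $k$ vertices (so $1$-linear forests are edgeless graphs). A pseudoforest is a graph each of whose connected components contains at most one cycle. *)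

theory Defs
  imports Main
begin

definition graph :: "'a set \<Rightarrow> ('a \<Rightarrow> 'a \<Rightarrow> bool) \<Rightarrow> bool" where
  "graph V E \<longleftrightarrow> finite V \<and> (\<forall>u v. E u v \<longrightarrow> u \<in> V \<and> v \<in> V)
     \<and> (\<forall>u v. E u v \<longrightarrow> E v u) \<and> (\<forall>u. \<not> E u u)"

definition orientation :: "('a \<Rightarrow> 'a \<Rightarrow> bool) \<Rightarrow> ('a \<Rightarrow> 'a \<Rightarrow> bool) \<Rightarrow> bool" where
  "orientation E D \<longleftrightarrow> (\<forall>u v. E u v \<longleftrightarrow> (D u v \<or> D v u)) \<and> (\<forall>u v. D u v \<longrightarrow> \<not> D v u)"

definition one_perfect :: "('a \<Rightarrow> 'a \<Rightarrow> bool) \<Rightarrow> ('a \<Rightarrow> 'a \<Rightarrow> bool) \<Rightarrow> bool" where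
  "one_perfect E D \<longleftrightarrow> (\<forall>v x y. D v x \<and> D v y \<and> x \<noteq> y \<longrightarrow> E x y)"

definition one_perfectly_orientable :: "'a set \<Rightarrow> ('a \<Rightarrow> 'a \<Rightarrow> bool) \<Rightarrow> bool" where
  "one_perfectly_orientable V E \<longleftrightarrow> (\<exists>D. orientation E D \<and> one_perfect E D)"

definition dprod_V :: "'a set \<Rightarrow> 'b set \<Rightarrow> ('a \<times> 'b) set" where
  "dprod_V V1 V2 = V1 \<times> V2"

definition dprod_E :: "('a \<Rightarrow> 'a \<Rightarrow> bool) \<Rightarrow> ('b \<Rightarrow> 'b \<Rightarrow> bool) \<Rightarrow> ('a \<times> 'b \<Rightarrow> 'a \<times> 'b \<Rightarrow> bool)" where
  "dprod_E E1 E2 = (\<lambda>(u,v) (u',v'). E1 u u' \<and> E2 v v')"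

definition induces_path :: "('a \<Rightarrow> 'a \<Rightarrow> bool) \<Rightarrow> 'a set \<Rightarrow> bool" where
  "induces_path E S \<longleftrightarrow> (\<exists>xs. xs \<noteq> [] \<and> distinct xs \<and> set xs = S \<and>
     (\<forall>u\<in>S. \<forall>v\<in>S. E u v \<longleftrightarrow>
        (\<exists>i. Suc i < length xs \<and> ((u = xs!i \<and> v = xs!Suc i) \<or> (v = xs!i \<and> u = xs!Suc i)))))"

definition linear_forest :: "nat \<Rightarrow> 'a set \<Rightarrow> ('a \<Rightarrow> 'a \<Rightarrow> bool) \<Rightarrow> bool" where
  "linear_forest k V E \<longleftrightarrow> (\<exists>P. \<Union>P = V \<and> (\<forall>S\<in>P. S \<noteq> {}) \<and>
     (\<forall>S\<in>P. \<forall>T\<in>P. S \<noteq> T \<longrightarrow> S \<inter> T = {}) \<and>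
     (\<forall>S\<in>P. induces_path E S \<and> card S \<le> k) \<and>
     (\<forall>S\<in>P. \<forall>T\<in>P. S \<noteq> T \<longrightarrow> (\<forall>u\<in>S. \<forall>v\<in>T. \<not> E u v)))"

text \<open>A cycle given as a list of distinct vertices (length at least 3), consecutive
  ones (cyclically) adjacent; the cycle as a subgraph is identified with its edge set.\<close>
definition is_cycle :: "'a set \<Rightarrow> ('a \<Rightarrow> 'a \<Rightarrow> bool) \<Rightarrow> 'a list \<Rightarrow> bool" where
  "is_cycle V E xs \<longleftrightarrow> length xs \<ge> 3 \<and> distinct xs \<and> set xs \<subseteq> V \<and>
     (\<forall>i < length xs. E (xs!i) (xs!((Suc i) mod length xs)))"

definition cycle_edges :: "'a list \<Rightarrow> 'a set set" where
  "cycle_edges xs = {{xs!i, xs!((Suc i) mod length xs)} | i. i < length xs}"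

definition connected_in :: "'a set \<Rightarrow> ('a \<Rightarrow> 'a \<Rightarrow> bool) \<Rightarrow> 'a \<Rightarrow> 'a \<Rightarrow> bool" where
  "connected_in V E u v \<longleftrightarrow> u \<in> V \<and> v \<in> V \<and> (\<lambda>x y. E x y \<and> x \<in> V \<and> y \<in> V)\<^sup>*\<^sup>* u v"

text \<open>Pseudoforest: every connected component contains at most one cycle, i.e. any
  two cycles lying in the same component are the same cycle (same edge set).\<close>
definition pseudoforest :: "'a set \<Rightarrow> ('a \<Rightarrow> 'a \<Rightarrow> bool) \<Rightarrow> bool" where
  "pseudoforest V E \<longleftrightarrow> (\<forall>xs ys. is_cycle V E xs \<and> is_cycle V E ys \<and>
     connected_in V E (hd xs) (hd ys) \<longrightarrow> cycle_edges xs = cycle_edges ys)"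

end

theory Submission
  imports Defs
begin


lemma graph_in: "graph V E \<Longrightarrow> E u v \<Longrightarrow> u \<in> V \<and> v \<in> V"
  by (simp add: graph_def)
lemma graph_sym: "graph V E \<Longrightarrow> E u v \<Longrightarrow> E v u"
  by (simp add: graph_def)
lemma graph_irr: "graph V E \<Longrightarrow> \<not> E u u"
  by (simp add: graph_def)
lemma graph_fin: "graph V E \<Longrightarrow> finite V"
  by (simp add: graph_def)

lemma dprod_E_simp[simp]: "dprod_E E1 E2 (a,b) (c,d) \<longleftrightarrow> E1 a c \<and> E2 b d"
  by (simp add: dprod_E_def)

lemma orient_E: "orientation E D \<Longrightarrow> D x y \<Longrightarrow> E x y"
  by (simp add: orientation_def)

lemma count_edges:
  assumes "finite S" "orientation E D"
    "\<And>v x y. v\<in>S \<Longrightarrow> x\<in>S \<Longrightarrow> y\<in>S \<Longrightarrow> D v x \<Longrightarrow> D v y \<Longrightarrow> x = y"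
  shows "card {p \<in> S \<times> S. E (fst p) (snd p)} \<le> 2 * card S"
proof -
  let ?P = "{p \<in> S \<times> S. D (fst p) (snd p)}"
  have eq: "{p \<in> S \<times> S. E (fst p) (snd p)} = ?P \<union> prod.swap ` ?P"
    using assms(2) unfolding orientation_def by (auto simp: image_iff)
  have fP: "finite ?P" using assms(1) by auto
  have "inj_on fst ?P" using assms(3) by (auto simp: inj_on_def)
  hence "card ?P = card (fst ` ?P)" by (simp add: card_image)
  also have "\<dots> \<le> card S" using assms(1) by (intro card_mono) auto
  finally have c1: "card ?P \<le> card S" .
  have "card (?P \<union> prod.swap ` ?P) \<le> card ?P + card (prod.swap ` ?P)"
    by (rule card_Un_le)
  also have "card (prod.swap ` ?P) \<le> card ?P" by (rule card_image_le[OF fP])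
  finally show ?thesis using eq c1 by simp
qed

lemma count_contra_set:
  assumes "finite S" "orientation E D"
    "\<And>v x y. v\<in>S \<Longrightarrow> x\<in>S \<Longrightarrow> y\<in>S \<Longrightarrow> D v x \<Longrightarrow> D v y \<Longrightarrow> x = y"
    "Q \<subseteq> {p \<in> S \<times> S. E (fst p) (snd p)}" "card Q > 2 * card S"
  shows False
proof -
  have "finite {p \<in> S \<times> S. E (fst p) (snd p)}" using assms(1) by auto
  hence "card Q \<le> card {p \<in> S \<times> S. E (fst p) (snd p)}" using assms(4) card_mono by blast
  moreover have "card {p \<in> S \<times> S. E (fst p) (snd p)} \<le> 2 * card S"
    by (rule count_edges[OF assms(1,2)]) (rule assms(3))
  ultimately show False using assms(5) by linarith
qed

lemma bip_outdeg:
  assumes "orientation E D" "one_perfect E D"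
    "\<forall>x\<in>A. \<forall>y\<in>A. \<not>E x y" "\<forall>x\<in>B. \<forall>y\<in>B. \<not>E x y"
    "v \<in> A \<union> B" "x \<in> A \<union> B" "y \<in> A \<union> B" "D v x" "D v y"
  shows "x = y"
proof (rule ccontr)
  assume ne: "x \<noteq> y"
  have e: "E v x" "E v y" "E x y" using assms ne unfolding orientation_def one_perfect_def by blast+
  show False using assms(3,4,5,6,7) e by blast
qed

lemma count_contra:
  assumes "orientation E D" "one_perfect E D"
    "\<forall>x\<in>set as. \<forall>y\<in>set as. \<not>E x y" "\<forall>x\<in>set bs. \<forall>y\<in>set bs. \<not>E x y"
    "distinct es" "\<forall>p\<in>set es. fst p \<in> set as \<union> set bs \<and> snd p \<in> set as \<union> set bs \<and> E (fst p) (snd p)"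
    "length es > 2 * (length as + length bs)"
  shows False
proof -
  let ?S = "set as \<union> set bs"
  have cS: "card ?S \<le> length as + length bs"
    by (metis card_Un_le card_length add_mono order_trans)
  have "card (set es) = length es" using assms(5) by (simp add: distinct_card)
  hence "card (set es) > 2 * card ?S" using cS assms(7) by (metis add_mult_distrib2 le_less_trans mult_le_mono2 mult_2)
  moreover have "set es \<subseteq> {p \<in> ?S \<times> ?S. E (fst p) (snd p)}" using assms(6) by auto
  ultimately show False
    using count_contra_set[of ?S E D "set es"] bip_outdeg[OF assms(1,2,3,4)] assms(1) by blast
qed

lemma obs_claw:
  assumes gG: "graph V1 E1" and gH: "graph V2 E2"
    and D: "orientation (dprod_E E1 E2) D" "one_perfect (dprod_E E1 E2) D"
    and c: "E1 c l1" "E1 c l2" "E1 c l3" "distinct [l1,l2,l3]"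
    and m: "E2 m e1" "E2 m e2" "e1 \<noteq> e2"
  shows False
proof -
  have d: "c \<noteq> l1" "c \<noteq> l2" "c \<noteq> l3" "m \<noteq> e1" "m \<noteq> e2"
    using c m graph_irr[OF gG] graph_irr[OF gH] by metis+
  have s: "E1 l1 c" "E1 l2 c" "E1 l3 c" "E2 e1 m" "E2 e2 m"
    using c m graph_sym[OF gG] graph_sym[OF gH] by metis+
  show False
  apply (rule count_contra[OF D, of "[(c,e1),(c,e2)]" "[(l1,m),(l2,m),(l3,m)]"
     "[((c,e1),(l1,m)),((c,e1),(l2,m)),((c,e1),(l3,m)),((c,e2),(l1,m)),((c,e2),(l2,m)),((c,e2),(l3,m)),
       ((l1,m),(c,e1)),((l2,m),(c,e1)),((l3,m),(c,e1)),((l1,m),(c,e2)),((l2,m),(c,e2)),((l3,m),(c,e2))]"])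
    using d s c m graph_irr[OF gG] graph_irr[OF gH] by auto
qed


lemma obs_p5:
  assumes gG: "graph V1 E1" and gH: "graph V2 E2"
    and D: "orientation (dprod_E E1 E2) D" "one_perfect (dprod_E E1 E2) D"
    and p: "E1 v1 v2" "E1 v2 v3" "E1 v3 v4" "E1 v4 v5" "distinct [v1,v2,v3,v4,v5]" "\<not> E1 v2 v4"
    and m: "E2 m e1" "E2 m e2" "e1 \<noteq> e2"
  shows False
proof -
  have d: "m \<noteq> e1" "m \<noteq> e2"
    using m graph_irr[OF gH] by metis+
  have s: "E1 v2 v1" "E1 v3 v2" "E1 v4 v3" "E1 v5 v4" "E2 e1 m" "E2 e2 m" "\<not> E1 v4 v2"
    using p m graph_sym[OF gG] graph_sym[OF gH] by metis+
  show False
  apply (rule count_contra[OF D, of "[(v1,m),(v3,m),(v5,m)]" "[(v2,e1),(v2,e2),(v4,e1),(v4,e2)]" "[((v1,m),(v2,e1)),((v2,e1),(v1,m)),((v1,m),(v2,e2)),((v2,e2),(v1,m)),((v3,m),(v2,e1)),((v2,e1),(v3,m)),((v3,m),(v2,e2)),((v2,e2),(v3,m)),((v3,m),(v4,e1)),((v4,e1),(v3,m)),((v3,m),(v4,e2)),((v4,e2),(v3,m)),((v5,m),(v4,e1)),((v4,e1),(v5,m)),((v5,m),(v4,e2)),((v4,e2),(v5,m))]"])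
    using d s p m graph_irr[OF gG] graph_irr[OF gH] by auto
qed

lemma obs_p4:
  assumes gG: "graph V1 E1" and gH: "graph V2 E2"
    and D: "orientation (dprod_E E1 E2) D" "one_perfect (dprod_E E1 E2) D"
    and p: "E1 v1 v2" "E1 v2 v3" "E1 v3 v4" "distinct [v1,v2,v3,v4]" "\<not> E1 v1 v3" "\<not> E1 v2 v4"
    and q: "E2 w1 w2" "E2 w2 w3" "E2 w3 w4" "distinct [w1,w2,w3,w4]"
  shows False
proof -
  have s: "E1 v2 v1" "E1 v3 v2" "E1 v4 v3" "E2 w2 w1" "E2 w3 w2" "E2 w4 w3" "\<not> E1 v3 v1" "\<not> E1 v4 v2"
    using p q graph_sym[OF gG] graph_sym[OF gH] by metis+
  show False
  apply (rule count_contra[OF D, of "[(v1,w1),(v1,w3),(v3,w1),(v3,w3)]" "[(v2,w2),(v2,w4),(v4,w2),(v4,w4)]" "[((v1,w1),(v2,w2)),((v2,w2),(v1,w1)),((v1,w3),(v2,w2)),((v2,w2),(v1,w3)),((v1,w3),(v2,w4)),((v2,w4),(v1,w3)),((v3,w1),(v2,w2)),((v2,w2),(v3,w1)),((v3,w3),(v2,w2)),((v2,w2),(v3,w3)),((v3,w3),(v2,w4)),((v2,w4),(v3,w3)),((v3,w1),(v4,w2)),((v4,w2),(v3,w1)),((v3,w3),(v4,w2)),((v4,w2),(v3,w3)),((v3,w3),(v4,w4)),((v4,w4),(v3,w3))]"])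
    using s p q graph_irr[OF gG] graph_irr[OF gH] by auto
qed


lemma obs_k33:
  assumes gG: "graph V1 E1" and gH: "graph V2 E2"
    and D: "orientation (dprod_E E1 E2) D" "one_perfect (dprod_E E1 E2) D"
    and t: "E1 t1 t2" "E1 t2 t3" "E1 t1 t3"
    and m: "E2 m e1" "E2 m e2" "E2 e1 e2"
  shows False
proof -
  have ir: "\<And>x. \<not> E1 x x" "\<And>x. \<not> E2 x x" using graph_irr[OF gG] graph_irr[OF gH] by auto
  have d: "t1 \<noteq> t2" "t2 \<noteq> t3" "t1 \<noteq> t3" "m \<noteq> e1" "m \<noteq> e2" "e1 \<noteq> e2"
    using t m ir by metis+
  have s: "E1 t2 t1" "E1 t3 t2" "E1 t3 t1" "E2 e1 m" "E2 e2 m" "E2 e2 e1"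
    using t m graph_sym[OF gG] graph_sym[OF gH] by metis+
  have o: "\<And>p q. dprod_E E1 E2 p q \<Longrightarrow> D p q \<or> D q p" using D(1) unfolding orientation_def by blast
  have op: "\<And>v x y. D v x \<Longrightarrow> D v y \<Longrightarrow> x \<noteq> y \<Longrightarrow> E1 (fst x) (fst y) \<and> E2 (snd x) (snd y)"
  proof -
    fix v x y assume "D v x" "D v y" "x \<noteq> y"
    hence "dprod_E E1 E2 x y" using D(2) unfolding one_perfect_def by blast
    thus "E1 (fst x) (fst y) \<and> E2 (snd x) (snd y)" by (cases x, cases y) simp
  qed
  have f: "D (t1,m) (t2,e1) \<or> D (t2,e1) (t1,m)"
      "D (t1,m) (t2,e2) \<or> D (t2,e2) (t1,m)"
      "D (t1,m) (t3,e1) \<or> D (t3,e1) (t1,m)"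
      "D (t1,m) (t3,e2) \<or> D (t3,e2) (t1,m)"
      "D (t1,e1) (t2,m) \<or> D (t2,m) (t1,e1)"
      "D (t1,e1) (t2,e2) \<or> D (t2,e2) (t1,e1)"
      "D (t1,e1) (t3,m) \<or> D (t3,m) (t1,e1)"
      "D (t1,e1) (t3,e2) \<or> D (t3,e2) (t1,e1)"
      "D (t1,e2) (t2,m) \<or> D (t2,m) (t1,e2)"
      "D (t1,e2) (t2,e1) \<or> D (t2,e1) (t1,e2)"
      "D (t1,e2) (t3,m) \<or> D (t3,m) (t1,e2)"
      "D (t1,e2) (t3,e1) \<or> D (t3,e1) (t1,e2)"
      "D (t2,m) (t3,e1) \<or> D (t3,e1) (t2,m)"
      "D (t2,m) (t3,e2) \<or> D (t3,e2) (t2,m)"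
      "D (t2,e1) (t3,m) \<or> D (t3,m) (t2,e1)"
      "D (t2,e1) (t3,e2) \<or> D (t3,e2) (t2,e1)"
      "D (t2,e2) (t3,m) \<or> D (t3,m) (t2,e2)"
      "D (t2,e2) (t3,e1) \<or> D (t3,e1) (t2,e2)"
    using o t m s by auto
  have "\<not> D (t1,m) (t2,e1) \<or> \<not> D (t1,m) (t2,e2)" using op[of "(t1,m)" "(t2,e1)" "(t2,e2)"] d ir by auto
  moreover have "\<not> D (t1,m) (t2,e1) \<or> \<not> D (t1,m) (t3,e1)" using op[of "(t1,m)" "(t2,e1)" "(t3,e1)"] d ir by auto
  moreover have "\<not> D (t1,m) (t2,e2) \<or> \<not> D (t1,m) (t3,e2)" using op[of "(t1,m)" "(t2,e2)" "(t3,e2)"] d ir by auto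
  moreover have "\<not> D (t1,m) (t3,e1) \<or> \<not> D (t1,m) (t3,e2)" using op[of "(t1,m)" "(t3,e1)" "(t3,e2)"] d ir by auto
  moreover have "\<not> D (t1,e1) (t2,m) \<or> \<not> D (t1,e1) (t2,e2)" using op[of "(t1,e1)" "(t2,m)" "(t2,e2)"] d ir by auto
  moreover have "\<not> D (t1,e1) (t2,m) \<or> \<not> D (t1,e1) (t3,m)" using op[of "(t1,e1)" "(t2,m)" "(t3,m)"] d ir by auto
  moreover have "\<not> D (t1,e1) (t2,e2) \<or> \<not> D (t1,e1) (t3,e2)" using op[of "(t1,e1)" "(t2,e2)" "(t3,e2)"] d ir by auto
  moreover have "\<not> D (t1,e1) (t3,m) \<or> \<not> D (t1,e1) (t3,e2)" using op[of "(t1,e1)" "(t3,m)" "(t3,e2)"] d ir by auto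
  moreover have "\<not> D (t1,e2) (t2,m) \<or> \<not> D (t1,e2) (t2,e1)" using op[of "(t1,e2)" "(t2,m)" "(t2,e1)"] d ir by auto
  moreover have "\<not> D (t1,e2) (t2,m) \<or> \<not> D (t1,e2) (t3,m)" using op[of "(t1,e2)" "(t2,m)" "(t3,m)"] d ir by auto
  moreover have "\<not> D (t1,e2) (t2,e1) \<or> \<not> D (t1,e2) (t3,e1)" using op[of "(t1,e2)" "(t2,e1)" "(t3,e1)"] d ir by auto
  moreover have "\<not> D (t1,e2) (t3,m) \<or> \<not> D (t1,e2) (t3,e1)" using op[of "(t1,e2)" "(t3,m)" "(t3,e1)"] d ir by auto
  moreover have "\<not> D (t2,m) (t1,e1) \<or> \<not> D (t2,m) (t1,e2)" using op[of "(t2,m)" "(t1,e1)" "(t1,e2)"] d ir by auto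
  moreover have "\<not> D (t2,m) (t1,e1) \<or> \<not> D (t2,m) (t3,e1)" using op[of "(t2,m)" "(t1,e1)" "(t3,e1)"] d ir by auto
  moreover have "\<not> D (t2,m) (t1,e2) \<or> \<not> D (t2,m) (t3,e2)" using op[of "(t2,m)" "(t1,e2)" "(t3,e2)"] d ir by auto
  moreover have "\<not> D (t2,m) (t3,e1) \<or> \<not> D (t2,m) (t3,e2)" using op[of "(t2,m)" "(t3,e1)" "(t3,e2)"] d ir by auto
  moreover have "\<not> D (t2,e1) (t1,m) \<or> \<not> D (t2,e1) (t1,e2)" using op[of "(t2,e1)" "(t1,m)" "(t1,e2)"] d ir by auto
  moreover have "\<not> D (t2,e1) (t1,m) \<or> \<not> D (t2,e1) (t3,m)" using op[of "(t2,e1)" "(t1,m)" "(t3,m)"] d ir by auto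
  moreover have "\<not> D (t2,e1) (t1,e2) \<or> \<not> D (t2,e1) (t3,e2)" using op[of "(t2,e1)" "(t1,e2)" "(t3,e2)"] d ir by auto
  moreover have "\<not> D (t2,e1) (t3,m) \<or> \<not> D (t2,e1) (t3,e2)" using op[of "(t2,e1)" "(t3,m)" "(t3,e2)"] d ir by auto
  moreover have "\<not> D (t2,e2) (t1,m) \<or> \<not> D (t2,e2) (t1,e1)" using op[of "(t2,e2)" "(t1,m)" "(t1,e1)"] d ir by auto
  moreover have "\<not> D (t2,e2) (t1,m) \<or> \<not> D (t2,e2) (t3,m)" using op[of "(t2,e2)" "(t1,m)" "(t3,m)"] d ir by auto
  moreover have "\<not> D (t2,e2) (t1,e1) \<or> \<not> D (t2,e2) (t3,e1)" using op[of "(t2,e2)" "(t1,e1)" "(t3,e1)"] d ir by auto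
  moreover have "\<not> D (t2,e2) (t3,m) \<or> \<not> D (t2,e2) (t3,e1)" using op[of "(t2,e2)" "(t3,m)" "(t3,e1)"] d ir by auto
  moreover have "\<not> D (t3,m) (t1,e1) \<or> \<not> D (t3,m) (t1,e2)" using op[of "(t3,m)" "(t1,e1)" "(t1,e2)"] d ir by auto
  moreover have "\<not> D (t3,m) (t1,e1) \<or> \<not> D (t3,m) (t2,e1)" using op[of "(t3,m)" "(t1,e1)" "(t2,e1)"] d ir by auto
  moreover have "\<not> D (t3,m) (t1,e2) \<or> \<not> D (t3,m) (t2,e2)" using op[of "(t3,m)" "(t1,e2)" "(t2,e2)"] d ir by auto
  moreover have "\<not> D (t3,m) (t2,e1) \<or> \<not> D (t3,m) (t2,e2)" using op[of "(t3,m)" "(t2,e1)" "(t2,e2)"] d ir by auto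
  moreover have "\<not> D (t3,e1) (t1,m) \<or> \<not> D (t3,e1) (t1,e2)" using op[of "(t3,e1)" "(t1,m)" "(t1,e2)"] d ir by auto
  moreover have "\<not> D (t3,e1) (t1,m) \<or> \<not> D (t3,e1) (t2,m)" using op[of "(t3,e1)" "(t1,m)" "(t2,m)"] d ir by auto
  moreover have "\<not> D (t3,e1) (t1,e2) \<or> \<not> D (t3,e1) (t2,e2)" using op[of "(t3,e1)" "(t1,e2)" "(t2,e2)"] d ir by auto
  moreover have "\<not> D (t3,e1) (t2,m) \<or> \<not> D (t3,e1) (t2,e2)" using op[of "(t3,e1)" "(t2,m)" "(t2,e2)"] d ir by auto
  moreover have "\<not> D (t3,e2) (t1,m) \<or> \<not> D (t3,e2) (t1,e1)" using op[of "(t3,e2)" "(t1,m)" "(t1,e1)"] d ir by auto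
  moreover have "\<not> D (t3,e2) (t1,m) \<or> \<not> D (t3,e2) (t2,m)" using op[of "(t3,e2)" "(t1,m)" "(t2,m)"] d ir by auto
  moreover have "\<not> D (t3,e2) (t1,e1) \<or> \<not> D (t3,e2) (t2,e1)" using op[of "(t3,e2)" "(t1,e1)" "(t2,e1)"] d ir by auto
  moreover have "\<not> D (t3,e2) (t2,m) \<or> \<not> D (t3,e2) (t2,e1)" using op[of "(t3,e2)" "(t2,m)" "(t2,e1)"] d ir by auto
  ultimately show False using f by sat
qed


lemma mod_succ_pred_ne:
  assumes "3 \<le> (k::nat)" "i < k"
  shows "(i+1) mod k \<noteq> (i+k-1) mod k"
proof (cases "i = 0")
  case True
  have "(i+1) mod k = 1" using True assms by simp
  moreover have "(i+k-1) mod k = k - 1" using True assms by simp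
  ultimately show ?thesis using assms by simp
next
  case False
  have eq: "i+k-1 = (i-1) + k" using False by simp
  have "(i+k-1) mod k = ((i-1)+k) mod k" by (simp only: eq)
  also have "\<dots> = (i-1) mod k" by (rule mod_add_self2)
  also have "\<dots> = i - 1" using assms by simp
  finally have a: "(i+k-1) mod k = i - 1" .
  show ?thesis
  proof (cases "i+1 = k")
    case True
    hence "(i+1) mod k = 0" by simp
    thus ?thesis using a True assms False by simp
  next
    case False2: False
    hence "(i+1) mod k = i+1" using assms by simp
    thus ?thesis using a False by simp
  qed
qed

lemma mod_pred_succ:
  assumes "0 < (k::nat)" "i < k"
  shows "((i+k-1) mod k + 1) mod k = i"
proof -
  have "((i+k-1) mod k + 1) mod k = ((i+k-1) + 1) mod k" by (rule mod_add_left_eq)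
  also have "(i+k-1) + 1 = i + k" using assms by simp
  finally show ?thesis using assms by simp
qed

lemma obs_cycle_tf:
  assumes gG: "graph V1 E1" and gH: "graph V2 E2"
    and D: "orientation (dprod_E E1 E2) D" "one_perfect (dprod_E E1 E2) D"
    and cyc: "is_cycle V1 E1 xs"
    and m: "E2 m e1" "E2 m e2" "e1 \<noteq> e2"
    and tri: "\<not>(E2 e1 e2 \<and> (\<exists>t1 t2 t3. E1 t1 t2 \<and> E1 t2 t3 \<and> E1 t1 t3))"
  shows False
proof -
  define k where "k = length xs"
  have k3: "3 \<le> k" and dist: "distinct xs" and cE: "\<And>i. i < k \<Longrightarrow> E1 (xs!i) (xs!((Suc i) mod k))"
    using cyc unfolding is_cycle_def k_def by auto
  have ir: "\<And>x. \<not> E1 x x" "\<And>x. \<not> E2 x x" using graph_irr[OF gG] graph_irr[OF gH] by auto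
  have sy: "\<And>x y. E1 x y \<Longrightarrow> E1 y x" "\<And>x y. E2 x y \<Longrightarrow> E2 y x"
    using graph_sym[OF gG] graph_sym[OF gH] by auto
  define S where "S = set xs \<times> {m,e1,e2}"
  have fS: "finite S" unfolding S_def by auto
  have cS: "card S \<le> k * 3"
  proof -
    have "card S = card (set xs) * card {m,e1,e2}" unfolding S_def by (rule card_cartesian_product)
    moreover have "card (set xs) = k" using dist k_def by (simp add: distinct_card)
    moreover have "card {m,e1,e2} \<le> 3" using card_length[of "[m,e1,e2]"] by simp
    ultimately show ?thesis by (metis mult_le_mono2)
  qed
  have od: "\<And>v x y. v\<in>S \<Longrightarrow> x\<in>S \<Longrightarrow> y\<in>S \<Longrightarrow> D v x \<Longrightarrow> D v y \<Longrightarrow> x = y"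
  proof (rule ccontr)
    fix v x y assume vs: "v\<in>S" "x\<in>S" "y\<in>S" "D v x" "D v y" "x \<noteq> y"
    hence e: "dprod_E E1 E2 v x" "dprod_E E1 E2 v y" "dprod_E E1 E2 x y"
      using D unfolding orientation_def one_perfect_def by blast+
    obtain a b where v: "v = (a,b)" by force
    obtain c d where x: "x = (c,d)" by force
    obtain f g where y: "y = (f,g)" by force
    have e1: "E1 a c" "E1 c f" "E1 a f" and e2: "E2 b d" "E2 d g" "E2 b g" using e v x y by auto
    have bs: "b \<in> {m,e1,e2}" "d \<in> {m,e1,e2}" "g \<in> {m,e1,e2}" using vs v x y S_def by auto
    have "E2 e1 e2" using bs e2 ir sy by (elim insertE emptyE; blast)
    thus False using tri e1 by blast
  qed
  define nx where "nx i s = (if s then (i+1) mod k else (i+k-1) mod k)" for i s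
  define g where "g = (\<lambda>(i::nat,s::bool,t::bool,d::bool).
     let p = ((xs!i, m), (xs!(nx i s), if t then e1 else e2)) in if d then p else prod.swap p)"
  have nxk: "nx i s < k" for i s using k3 unfolding nx_def by auto
  have nxE: "E1 (xs!i) (xs!(nx i s))" if "i < k" for i s
  proof (cases s)
    case True thus ?thesis using cE[OF that] nx_def by simp
  next
    case False
    have "(i+k-1) mod k < k" using k3 by auto
    from cE[OF this] have "E1 (xs!((i+k-1) mod k)) (xs!i)"
      using mod_pred_succ[of k i] that k3 by simp
    thus ?thesis using False nx_def sy(1) by simp
  qed
  let ?Dom = "{..<k} \<times> (UNIV :: (bool \<times> bool \<times> bool) set)"
  have inj: "inj_on g ?Dom"
  proof (rule inj_onI)
    fix p q assume pq: "p \<in> ?Dom" "q \<in> ?Dom" "g p = g q"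
    obtain i s t d where p: "p = (i,s,t,d)" by (cases p) auto
    obtain i' s' t' d' where q: "q = (i',s',t',d')" by (cases q) auto
    have ik: "i < k" "i' < k" using pq p q by auto
    have me: "m \<noteq> e1" "m \<noteq> e2" using m ir by metis+
    have dd: "d = d'" using pq(3) p q me unfolding g_def Let_def by (auto split: if_splits)
    have eqs: "xs!i = xs!i'" "xs!(nx i s) = xs!(nx i' s')" "(if t then e1 else e2) = (if t' then e1 else e2)"
      using pq(3) p q dd unfolding g_def Let_def by (auto split: if_splits)
    have ii: "i = i'" using eqs(1) ik dist k_def nth_eq_iff_index_eq by metis
    have "nx i s = nx i' s'" using eqs(2) nxk dist k_def nth_eq_iff_index_eq by metis
    hence ss: "s = s'" using ii mod_succ_pred_ne[OF k3 ik(1)] unfolding nx_def by (auto split: if_splits)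
    have tt: "t = t'" using eqs(3) m(3) by (auto split: if_splits)
    show "p = q" using p q ii ss tt dd by simp
  qed
  have cQ: "card (g ` ?Dom) = k * 8"
  proof -
    have "card (g ` ?Dom) = card ?Dom" using inj by (rule card_image)
    also have "\<dots> = k * 8"
    proof -
      have "card (UNIV :: (bool \<times> bool \<times> bool) set) = 8"
        by (simp add: card_UNIV_bool UNIV_Times_UNIV[symmetric] card_cartesian_product del: UNIV_Times_UNIV)
      thus ?thesis by (simp add: card_cartesian_product)
    qed
    finally show ?thesis .
  qed
  have sub: "g ` ?Dom \<subseteq> {p \<in> S \<times> S. dprod_E E1 E2 (fst p) (snd p)}"
  proof
    fix z assume "z \<in> g ` ?Dom"
    then obtain i s t d where z: "z = g (i,s,t,d)" and ik: "i < k" by auto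
    have in1: "xs!i \<in> set xs" "xs!(nx i s) \<in> set xs" using ik nxk k_def by auto
    have ee: "E2 m (if t then e1 else e2)" "E2 (if t then e1 else e2) m" using m sy(2)[OF m(1)] sy(2)[OF m(2)] by auto
    show "z \<in> {p \<in> S \<times> S. dprod_E E1 E2 (fst p) (snd p)}"
      using z in1 ee nxE[OF ik, of s] sy(1)[OF nxE[OF ik, of s]] unfolding g_def Let_def S_def by (auto split: if_splits)
  qed
  have lt: "2 * card S < card (g ` ?Dom)" using cQ cS k3 by linarith
  show False by (rule count_contra_set[OF fS D(1) od sub lt])
qed

lemma obs_cycle:
  assumes gG: "graph V1 E1" and gH: "graph V2 E2"
    and D: "orientation (dprod_E E1 E2) D" "one_perfect (dprod_E E1 E2) D"
    and cyc: "is_cycle V1 E1 xs"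
    and m: "E2 m e1" "E2 m e2" "e1 \<noteq> e2"
  shows False
proof (cases "E2 e1 e2 \<and> (\<exists>t1 t2 t3. E1 t1 t2 \<and> E1 t2 t3 \<and> E1 t1 t3)")
  case True
  then obtain t1 t2 t3 where "E1 t1 t2" "E1 t2 t3" "E1 t1 t3" "E2 e1 e2" by blast
  thus False using obs_k33[OF gG gH D] m by blast
next
  case False
  thus False using obs_cycle_tf[OF gG gH D cyc m] by blast
qed


definition out1 :: "('a \<Rightarrow> 'a \<Rightarrow> bool) \<Rightarrow> bool" where
  "out1 D \<longleftrightarrow> (\<forall>v x y. D v x \<longrightarrow> D v y \<longrightarrow> x = y)"

lemma out1D: "out1 D \<Longrightarrow> D v x \<Longrightarrow> D v y \<Longrightarrow> x = y"
  unfolding out1_def by blast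

lemma mod_lt3: "3 \<le> (k::nat) \<Longrightarrow> j mod k < k"
  by (metis mod_less_divisor not_numeral_le_zero gr0I)

lemma nth_mod_in: "3 \<le> length xs \<Longrightarrow> xs!(j mod length xs) \<in> set xs"
  using mod_lt3 nth_mem by blast

lemma mod_plus2_ne:
  assumes "3 \<le> (k::nat)" "j < k"
  shows "(j+2) mod k \<noteq> j"
proof (cases "j+2 < k")
  case True thus ?thesis by simp
next
  case False
  hence "(j+2) mod k = j + 2 - k" using assms by (simp add: mod_if)
  thus ?thesis using assms False by simp
qed

lemma suc_suc_mod: "Suc (Suc j mod k) mod k = (j+2) mod k"
  by (metis add_2_eq_Suc' mod_Suc_eq)

lemma cyc_basic:
  assumes "is_cycle V E xs"
  shows "3 \<le> length xs" "distinct xs" "\<And>i. i < length xs \<Longrightarrow> E (xs!i) (xs!(Suc i mod length xs))"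
    "set xs \<subseteq> V"
  using assms unfolding is_cycle_def by auto

lemma cyc_dir:
  assumes cyc: "is_cycle V E xs" and o: "orientation E D"
    and u1: "out1 D"
  shows "(\<forall>i<length xs. D (xs!i) (xs!(Suc i mod length xs))) \<or>
         (\<forall>i<length xs. D (xs!(Suc i mod length xs)) (xs!i))"
proof (cases "\<forall>i<length xs. D (xs!i) (xs!(Suc i mod length xs))")
  case True thus ?thesis by blast
next
  case False
  define k where "k = length xs"
  have k3: "3 \<le> k" and dist: "distinct xs" and cE: "\<And>i. i < k \<Longrightarrow> E (xs!i) (xs!(Suc i mod k))"
    using cyc_basic[OF cyc] k_def by auto
  have eD: "\<And>x y. E x y \<Longrightarrow> D x y \<or> D y x" using o unfolding orientation_def by blast
  from False obtain i0 where i0: "i0 < k" "\<not> D (xs!i0) (xs!(Suc i0 mod k))" using k_def by auto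
  have b0: "D (xs!(Suc i0 mod k)) (xs!i0)" using eD[OF cE[OF i0(1)]] i0(2) by blast
  have step: "\<forall>n. D (xs!(Suc ((i0+n) mod k) mod k)) (xs!((i0+n) mod k))"
  proof
    fix n show "D (xs!(Suc ((i0+n) mod k) mod k)) (xs!((i0+n) mod k))"
    proof (induction n)
      case 0 thus ?case using b0 i0 by simp
    next
      case (Suc n)
      define j where "j = (i0+n) mod k"
      have jk: "j < k" using k3 j_def by simp
      have nj: "(i0 + Suc n) mod k = Suc j mod k" unfolding j_def by (simp add: mod_Suc_eq)
      have ih: "D (xs!(Suc j mod k)) (xs!j)" using Suc j_def by simp
      have jk1: "Suc j mod k < k" using k3 by simp
      have e: "E (xs!(Suc j mod k)) (xs!(Suc (Suc j mod k) mod k))" using cE[OF jk1] .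
      have "\<not> D (xs!(Suc j mod k)) (xs!(Suc (Suc j mod k) mod k))"
      proof
        assume "D (xs!(Suc j mod k)) (xs!(Suc (Suc j mod k) mod k))"
        hence "xs!j = xs!(Suc (Suc j mod k) mod k)" using out1D[OF u1] ih by blast
        hence "xs!j = xs!((j+2) mod k)" using suc_suc_mod by metis
        moreover have "(j+2) mod k < length xs" using k3 k_def by (metis mod_less_divisor not_numeral_le_zero gr0I)
        ultimately have "j = (j+2) mod k" using nth_eq_iff_index_eq[OF dist] jk k_def by metis
        thus False using mod_plus2_ne[OF k3 jk] by simp
      qed
      hence "D (xs!(Suc (Suc j mod k) mod k)) (xs!(Suc j mod k))" using eD[OF e] by blast
      thus ?case using nj by simp
    qed
  qed
  have "\<forall>i<length xs. D (xs!(Suc i mod length xs)) (xs!i)"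
  proof (intro allI impI)
    fix i assume ik: "i < length xs"
    have "(i0 + (i + k - i0)) mod k = i" using ik i0 k_def by simp
    thus "D (xs!(Suc i mod length xs)) (xs!i)" using step[rule_format, of "i+k-i0"] k_def by simp
  qed
  thus ?thesis by blast
qed


lemma cyc_reach:
  assumes cyc: "is_cycle V E xs" and o: "orientation E D"
    and u1: "out1 D"
    and xy: "x \<in> set xs" "y \<in> set xs"
  shows "D\<^sup>*\<^sup>* x y"
proof -
  define k where "k = length xs"
  have k3: "3 \<le> k" using cyc_basic[OF cyc] k_def by auto
  obtain i j where ij: "i < k" "j < k" "x = xs!i" "y = xs!j" using xy k_def by (metis in_set_conv_nth)
  from cyc_dir[OF cyc o u1] show ?thesis
  proof
    assume F: "\<forall>i<length xs. D (xs!i) (xs!(Suc i mod length xs))"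
    have "\<forall>n. D\<^sup>*\<^sup>* (xs!i) (xs!((i+n) mod k))"
    proof
      fix n show "D\<^sup>*\<^sup>* (xs!i) (xs!((i+n) mod k))"
      proof (induction n)
        case 0 thus ?case using ij by simp
      next
        case (Suc n)
        have "(i+n) mod k < length xs" using mod_lt3[OF k3] k_def by simp
        hence "D (xs!((i+n) mod k)) (xs!(Suc ((i+n) mod k) mod k))" using F k_def by simp
        moreover have "Suc ((i+n) mod k) mod k = (i + Suc n) mod k" by (simp add: mod_Suc_eq)
        ultimately show ?case using Suc by (metis rtranclp.rtrancl_into_rtrancl)
      qed
    qed
    moreover have "(i + (j+k-i)) mod k = j" using ij by simp
    ultimately show ?thesis using ij by metis
  next
    assume B: "\<forall>i<length xs. D (xs!(Suc i mod length xs)) (xs!i)"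
    have "\<forall>n. D\<^sup>*\<^sup>* (xs!((j+n) mod k)) (xs!j)"
    proof
      fix n show "D\<^sup>*\<^sup>* (xs!((j+n) mod k)) (xs!j)"
      proof (induction n)
        case 0 thus ?case using ij by simp
      next
        case (Suc n)
        have "(j+n) mod k < length xs" using mod_lt3[OF k3] k_def by simp
        hence "D (xs!(Suc ((j+n) mod k) mod k)) (xs!((j+n) mod k))" using B k_def by simp
        moreover have "Suc ((j+n) mod k) mod k = (j + Suc n) mod k" by (simp add: mod_Suc_eq)
        ultimately show ?case using Suc by (metis converse_rtranclp_into_rtranclp)
      qed
    qed
    moreover have "(j + (i+k-j)) mod k = i" using ij by simp
    ultimately show ?thesis using ij by metis
  qed
qed

lemma cyc_pred:
  assumes cyc: "is_cycle V E xs" and o: "orientation E D"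
    and u1: "out1 D"
    and B: "\<forall>i<length xs. D (xs!(Suc i mod length xs)) (xs!i)" and i: "i < length xs"
  shows "D (xs!i) (xs!((i + length xs - 1) mod length xs))"
proof -
  define k where "k = length xs"
  have k3: "3 \<le> k" using cyc_basic[OF cyc] k_def by auto
  have p: "(i+k-1) mod k < k" using k3 by simp
  have ne: "xs \<noteq> []" using k3 k_def by auto
  have "((i+k-1) mod k + 1) mod k = i" using mod_pred_succ[of k i] k3 i k_def ne by simp
  thus ?thesis using B p k_def by (metis Suc_eq_plus1)
qed

lemma cyc_closed:
  assumes cyc: "is_cycle V E xs" and o: "orientation E D"
    and u1: "out1 D"
    and x: "x \<in> set xs" and d: "D x y"
  shows "y \<in> set xs"
proof -
  define k where "k = length xs"
  have k3: "3 \<le> k" using cyc_basic[OF cyc] k_def by auto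
  obtain i where i: "i < k" "x = xs!i" using x k_def by (metis in_set_conv_nth)
  from cyc_dir[OF cyc o u1] show ?thesis
  proof
    assume F: "\<forall>i<length xs. D (xs!i) (xs!(Suc i mod length xs))"
    hence "y = xs!(Suc i mod k)" using out1D[OF u1] d i k_def by blast
    thus ?thesis using nth_mod_in[of xs] k3 k_def by simp
  next
    assume B: "\<forall>i<length xs. D (xs!(Suc i mod length xs)) (xs!i)"
    hence "y = xs!((i+k-1) mod k)" using cyc_pred[OF cyc o u1 B] out1D[OF u1] d i k_def by blast
    thus ?thesis using nth_mod_in[of xs] k3 k_def by simp
  qed
qed

lemma cyc_closed_rt:
  assumes cyc: "is_cycle V E xs" and o: "orientation E D"
    and u1: "out1 D"
    and r: "D\<^sup>*\<^sup>* x y" and x: "x \<in> set xs"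
  shows "y \<in> set xs"
  using r x by (induction rule: rtranclp_induct) (auto intro: cyc_closed[OF cyc o u1])

lemma cyc_edges:
  assumes cyc: "is_cycle V E xs" and o: "orientation E D"
    and u1: "out1 D"
  shows "cycle_edges xs = {{x,y} | x y. x \<in> set xs \<and> D x y}"
proof -
  define k where "k = length xs"
  have k3: "3 \<le> k" using cyc_basic[OF cyc] k_def by auto
  from cyc_dir[OF cyc o u1] show ?thesis
  proof
    assume F: "\<forall>i<length xs. D (xs!i) (xs!(Suc i mod length xs))"
    show ?thesis
    proof
      show "cycle_edges xs \<subseteq> {{x,y} | x y. x \<in> set xs \<and> D x y}"
        unfolding cycle_edges_def using F by fastforce
      show "{{x,y} | x y. x \<in> set xs \<and> D x y} \<subseteq> cycle_edges xs"
      proof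
        fix e assume "e \<in> {{x,y} | x y. x \<in> set xs \<and> D x y}"
        then obtain x y where e: "e = {x,y}" "x \<in> set xs" "D x y" by blast
        obtain i where i: "i < k" "x = xs!i" using e k_def by (metis in_set_conv_nth)
        have "y = xs!(Suc i mod k)" using F out1D[OF u1] e i k_def by blast
        thus "e \<in> cycle_edges xs" unfolding cycle_edges_def using e i k_def by blast
      qed
    qed
  next
    assume B: "\<forall>i<length xs. D (xs!(Suc i mod length xs)) (xs!i)"
    show ?thesis
    proof
      show "cycle_edges xs \<subseteq> {{x,y} | x y. x \<in> set xs \<and> D x y}"
      proof
        fix e assume "e \<in> cycle_edges xs"
        then obtain i where i: "i < k" "e = {xs!i, xs!(Suc i mod k)}" unfolding cycle_edges_def k_def by blast
        have "xs!(Suc i mod k) \<in> set xs" using nth_mod_in[of xs] k3 k_def by simp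
        moreover have "e = {xs!(Suc i mod k), xs!i}" using i by blast
        ultimately show "e \<in> {{x,y} | x y. x \<in> set xs \<and> D x y}" using B i k_def by blast
      qed
      show "{{x,y} | x y. x \<in> set xs \<and> D x y} \<subseteq> cycle_edges xs"
      proof
        fix e assume "e \<in> {{x,y} | x y. x \<in> set xs \<and> D x y}"
        then obtain x y where e: "e = {x,y}" "x \<in> set xs" "D x y" by blast
        obtain i where i: "i < k" "x = xs!i" using e k_def by (metis in_set_conv_nth)
        define p where "p = (i+k-1) mod k"
        have pk: "p < k" using k3 p_def by simp
        have "y = xs!p" using cyc_pred[OF cyc o u1 B] out1D[OF u1] e i k_def p_def by blast
        moreover have "(p + 1) mod k = i" using mod_pred_succ[of k i] k3 i p_def by simp
        ultimately have "e = {xs!p, xs!(Suc p mod k)}" using e i by (simp add: insert_commute)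
        thus "e \<in> cycle_edges xs" unfolding cycle_edges_def using pk k_def by blast
      qed
    qed
  qed
qed

lemma od1_pseudoforest:
  assumes g: "graph V E" and o: "orientation E D"
    and u1: "out1 D"
  shows "pseudoforest V E"
  unfolding pseudoforest_def
proof (intro allI impI, elim conjE)
  fix xs ys assume cx: "is_cycle V E xs" and cy: "is_cycle V E ys"
    and con: "connected_in V E (hd xs) (hd ys)"
  define good where "good z \<longleftrightarrow> (\<exists>c\<in>set xs. D\<^sup>*\<^sup>* z c)" for z
  have ne: "xs \<noteq> []" "ys \<noteq> []" using cyc_basic[OF cx] cyc_basic[OF cy] by auto
  have r: "(\<lambda>x y. E x y \<and> x \<in> V \<and> y \<in> V)\<^sup>*\<^sup>* (hd xs) (hd ys)" using con unfolding connected_in_def by blast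
  have "good (hd ys)"
    using r
  proof (induction rule: rtranclp_induct)
    case base thus ?case unfolding good_def using ne by auto
  next
    case (step y z)
    have e: "E y z" using step by blast
    from step.IH obtain c where c: "c \<in> set xs" "D\<^sup>*\<^sup>* y c" unfolding good_def by blast
    have "D y z \<or> D z y" using o e unfolding orientation_def by blast
    thus ?case
    proof
      assume dzy: "D z y"
      thus ?thesis using c unfolding good_def by (meson converse_rtranclp_into_rtranclp)
    next
      assume dyz: "D y z"
      show ?thesis
      proof (cases "y \<in> set xs")
        case True
        hence "z \<in> set xs" using cyc_closed[OF cx o u1] dyz by blast
        thus ?thesis unfolding good_def by blast
      next
        case False
        hence "y \<noteq> c" using c by blast
        then obtain w where "D y w" "D\<^sup>*\<^sup>* w c" using c(2) by (metis converse_rtranclpE)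
        hence "D\<^sup>*\<^sup>* z c" using out1D[OF u1] dyz by metis
        thus ?thesis using c unfolding good_def by blast
      qed
    qed
  qed
  then obtain c where c: "c \<in> set xs" "D\<^sup>*\<^sup>* (hd ys) c" unfolding good_def by blast
  have cy': "c \<in> set ys" using cyc_closed_rt[OF cy o u1 c(2)] ne by simp
  have "set xs = set ys"
  proof
    show "set xs \<subseteq> set ys" using cyc_reach[OF cx o u1 c(1)] cyc_closed_rt[OF cy o u1 _ cy'] by blast
    show "set ys \<subseteq> set xs" using cyc_reach[OF cy o u1 cy'] cyc_closed_rt[OF cx o u1 _ c(1)] by blast
  qed
  thus "cycle_edges xs = cycle_edges ys" using cyc_edges[OF cx o u1] cyc_edges[OF cy o u1] by simp
qed


definition lift :: "'a \<Rightarrow> 'a \<Rightarrow> 'b list \<Rightarrow> ('a \<times> 'b) list" where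
  "lift c c' xs = map (\<lambda>j. (if even j then c else c', xs!(j mod length xs)))
     [0..<(if even (length xs) then length xs else 2 * length xs)]"

lemma lift_len: "length (lift c c' xs) = (if even (length xs) then length xs else 2 * length xs)"
  unfolding lift_def by simp

lemma lift_nth: "j < length (lift c c' xs) \<Longrightarrow> lift c c' xs ! j = (if even j then c else c', xs!(j mod length xs))"
  unfolding lift_def by (simp del: upt_Suc)

lemma lift_len_even: "even (length (lift c c' xs))"
  unfolding lift_len by simp

lemma lift_dvd: "length xs dvd length (lift c c' xs)"
  unfolding lift_len by simp

lemma lift_len_ge: "length xs \<le> length (lift c c' xs)"
  unfolding lift_len by simp

lemma lift_cycle:
  assumes cyc: "is_cycle V E xs" and cc: "c \<noteq> c'" "E1 c c'" "E1 c' c"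
    and V': "V' = {c,c'} \<times> V" and E': "\<And>p q. E' p q \<longleftrightarrow> E1 (fst p) (fst q) \<and> E (snd p) (snd q)"
  shows "is_cycle V' E' (lift c c' xs)"
proof -
  define k where "k = length xs"
  define L where "L = lift c c' xs"
  define n where "n = length L"
  have k3: "3 \<le> k" and dist: "distinct xs" and cE: "\<And>i. i < k \<Longrightarrow> E (xs!i) (xs!(Suc i mod k))"
    and sV: "set xs \<subseteq> V"
    using cyc_basic[OF cyc] k_def by auto
  have nk: "k \<le> n" "k dvd n" "even n" using lift_len_ge lift_dvd lift_len_even k_def n_def L_def by metis+
  have nn: "n = (if even k then k else 2*k)" using lift_len n_def L_def k_def by metis
  have Lj: "\<And>j. j < n \<Longrightarrow> L!j = (if even j then c else c', xs!(j mod k))"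
    using lift_nth n_def L_def k_def by metis
  have kp: "0 < k" using k3 by simp
  have "distinct L"
  proof (subst distinct_conv_nth, intro allI impI)
    fix i j assume ij: "i < length L" "j < length L" "i \<noteq> j"
    show "L!i \<noteq> L!j"
    proof
      assume eq: "L!i = L!j"
      hence par: "even i = even j" and xe: "xs!(i mod k) = xs!(j mod k)"
        using Lj ij n_def cc(1) by (auto split: if_splits)
      have "i mod k = j mod k" using xe dist nth_eq_iff_index_eq kp k_def by (metis mod_less_divisor)
      show False
      proof (cases "even k")
        case True
        hence "i < k" "j < k" using ij n_def nn by auto
        thus False using \<open>i mod k = j mod k\<close> ij by simp
      next
        case False
        hence lt: "i < 2*k" "j < 2*k" using ij n_def nn by auto
        have "i = j \<or> i = j + k \<or> j = i + k"
        proof -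
          have m2: "\<And>x. x < 2*k \<Longrightarrow> x mod k = (if x < k then x else x - k)"
          proof -
            fix x assume x: "x < 2*k"
            show "x mod k = (if x < k then x else x - k)"
            proof (cases "x < k")
              case False
              hence "x mod k = (x - k) mod k" by (simp add: le_mod_geq)
              also have "\<dots> = x - k" using x False by simp
              finally show ?thesis using False by simp
            qed simp
          qed
          show ?thesis using m2[OF lt(1)] m2[OF lt(2)] \<open>i mod k = j mod k\<close> by (auto split: if_splits)
        qed
        thus False using ij(3) par False by auto
      qed
    qed
  qed
  moreover have "length L \<ge> 3" using nk k3 n_def by simp
  moreover have "set L \<subseteq> V'"
  proof
    fix p assume "p \<in> set L"
    then obtain j where j: "j < n" "p = L!j" using n_def by (metis in_set_conv_nth)
    have "xs!(j mod k) \<in> V" using sV kp k_def nth_mem mod_less_divisor by blast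
    thus "p \<in> V'" using Lj[OF j(1)] j V' by auto
  qed
  moreover have "\<forall>i < length L. E' (L!i) (L!(Suc i mod length L))"
  proof (intro allI impI)
    fix j assume j: "j < length L"
    have jn: "j < n" "Suc j mod n < n" using j n_def nk k3 by auto
    have s1: "(Suc j mod n) mod k = Suc (j mod k) mod k"
      using nk(2) by (simp add: mod_mod_cancel mod_Suc_eq)
    have ev: "even (Suc j mod n) \<longleftrightarrow> \<not> even j"
    proof (cases "Suc j < n")
      case True thus ?thesis by simp
    next
      case False
      hence sj: "Suc j = n" using jn by simp
      hence "odd j" using nk(3) by (metis even_Suc)
      thus ?thesis using sj by simp
    qed
    have f: "E1 (if even j then c else c') (if even (Suc j mod n) then c else c')"
      using ev cc by auto
    have "E (xs!(j mod k)) (xs!(Suc (j mod k) mod k))" using cE kp by simp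
    thus "E' (L!j) (L!(Suc j mod length L))" using E' Lj[OF jn(1)] Lj[OF jn(2)] f s1 n_def by simp
  qed
  ultimately show ?thesis unfolding is_cycle_def L_def by blast
qed

lemma lift_edges:
  assumes cyc: "is_cycle V E xs"
  shows "(\<lambda>e. snd ` e) ` cycle_edges (lift c c' xs) = cycle_edges xs"
proof -
  define k where "k = length xs"
  define L where "L = lift c c' xs"
  define n where "n = length L"
  have k3: "3 \<le> k" using cyc_basic[OF cyc] k_def by auto
  have kp: "0 < k" using k3 by simp
  have nk: "k \<le> n" "k dvd n" using lift_len_ge lift_dvd k_def n_def L_def by metis+
  have Lj: "\<And>j. j < n \<Longrightarrow> snd (L!j) = xs!(j mod k)"
    using lift_nth n_def L_def k_def by (metis snd_conv)
  have np: "0 < n" using nk kp by simp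
  have s1: "\<And>j. (Suc j mod n) mod k = Suc (j mod k) mod k"
    using nk(2) by (simp add: mod_mod_cancel mod_Suc_eq)
  have im: "\<And>j. j < n \<Longrightarrow> snd ` {L!j, L!(Suc j mod n)} = {xs!(j mod k), xs!(Suc (j mod k) mod k)}"
    using Lj np s1 by simp
  show ?thesis
  proof
    show "(\<lambda>e. snd ` e) ` cycle_edges (lift c c' xs) \<subseteq> cycle_edges xs"
    proof
      fix e assume "e \<in> (\<lambda>e. snd ` e) ` cycle_edges (lift c c' xs)"
      then obtain j where j: "j < n" "e = snd ` {L!j, L!(Suc j mod n)}"
        unfolding cycle_edges_def L_def n_def by blast
      thus "e \<in> cycle_edges xs" using im[OF j(1)] kp unfolding cycle_edges_def k_def by auto
    qed
    show "cycle_edges xs \<subseteq> (\<lambda>e. snd ` e) ` cycle_edges (lift c c' xs)"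
    proof
      fix e assume "e \<in> cycle_edges xs"
      then obtain i where i: "i < k" "e = {xs!i, xs!(Suc i mod k)}" unfolding cycle_edges_def k_def by blast
      have "i < n" using i nk by simp
      moreover have "e = snd ` {L!i, L!(Suc i mod n)}" using im[OF \<open>i < n\<close>] i by simp
      ultimately show "e \<in> (\<lambda>e. snd ` e) ` cycle_edges (lift c c' xs)"
        unfolding cycle_edges_def L_def n_def by blast
    qed
  qed
qed

lemma lift_hd: "xs \<noteq> [] \<Longrightarrow> hd (lift c c' xs) = (c, hd xs)"
  unfolding lift_def by (simp add: hd_map hd_conv_nth upt_conv_Cons)


lemma obs_pf:
  assumes gG: "graph V1 E1" and gH: "graph V2 E2"
    and D: "orientation (dprod_E E1 E2) D" "one_perfect (dprod_E E1 E2) D"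
    and ab: "E1 a b"
  shows "pseudoforest V2 E2"
proof -
  have ir1: "\<And>x. \<not> E1 x x" and ir2: "\<And>x. \<not> E2 x x" using graph_irr[OF gG] graph_irr[OF gH] by auto
  have ba: "E1 b a" using graph_sym[OF gG ab] .
  have anb: "a \<noteq> b" using ab ir1 by metis
  define E1' where "E1' x y \<longleftrightarrow> x \<in> {a,b} \<and> y \<in> {a,b} \<and> E1 x y" for x y
  define V' where "V' = {a,b} \<times> V2"
  define E' where "E' p q \<longleftrightarrow> E1' (fst p) (fst q) \<and> E2 (snd p) (snd q)" for p q
  define D' where "D' p q \<longleftrightarrow> D p q \<and> fst p \<in> {a,b} \<and> fst q \<in> {a,b}" for p q
  have dpE: "\<And>p q. dprod_E E1 E2 p q \<longleftrightarrow> E1 (fst p) (fst q) \<and> E2 (snd p) (snd q)"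
    by (auto simp: dprod_E_def split: prod.splits)
  have g': "graph V' E'"
    unfolding graph_def
  proof (intro conjI allI impI)
    show "finite V'" using graph_fin[OF gH] V'_def by simp
    fix u v
    show "E' u v \<Longrightarrow> u \<in> V'" "E' u v \<Longrightarrow> v \<in> V'"
      using graph_in[OF gH] unfolding E'_def E1'_def V'_def by (auto simp: mem_Times_iff)
    show "E' u v \<Longrightarrow> E' v u" using graph_sym[OF gG] graph_sym[OF gH] unfolding E'_def E1'_def by blast
  next
    fix u show "\<not> E' u u" using ir1 unfolding E'_def E1'_def by blast
  qed
  have o': "orientation E' D'"
    using D(1) unfolding orientation_def E'_def E1'_def D'_def dpE by blast
  have u': "out1 D'"
    unfolding out1_def
  proof (intro allI impI)
    fix v x y assume dx: "D' v x" and dy: "D' v y"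
    show "x = y"
    proof (rule ccontr)
      assume "x \<noteq> y"
      hence "E1 (fst x) (fst y)" using D(2) dx dy unfolding one_perfect_def D'_def dpE by blast
      moreover have "E1 (fst v) (fst x)" "E1 (fst v) (fst y)" using dx dy D(1) unfolding D'_def orientation_def dpE by blast+
      moreover have "fst v \<in> {a,b}" "fst x \<in> {a,b}" "fst y \<in> {a,b}" using dx dy D'_def by auto
      ultimately show False using ir1 by auto
    qed
  qed
  have pf': "pseudoforest V' E'" by (rule od1_pseudoforest[OF g' o' u'])
  define oth where "oth c = (if c = a then b else a)" for c
  have oth: "\<And>c. c \<in> {a,b} \<Longrightarrow> oth c \<in> {a,b} \<and> c \<noteq> oth c \<and> E1' c (oth c) \<and> E1' (oth c) c"
    using ab ba anb unfolding oth_def E1'_def by auto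
  have conn: "\<exists>c'\<in>{a,b}. (\<lambda>x y. E' x y \<and> x \<in> V' \<and> y \<in> V')\<^sup>*\<^sup>* (a,y) (c',z)"
    if r: "(\<lambda>x y. E2 x y \<and> x \<in> V2 \<and> y \<in> V2)\<^sup>*\<^sup>* y z" for y z
    using r
  proof (induction rule: rtranclp_induct)
    case base thus ?case by blast
  next
    case (step y' z)
    then obtain c' where c': "c' \<in> {a,b}" "(\<lambda>x y. E' x y \<and> x \<in> V' \<and> y \<in> V')\<^sup>*\<^sup>* (a,y) (c',y')" by blast
    have "E' (c',y') (oth c', z)" using oth[OF c'(1)] step(2) unfolding E'_def by simp
    moreover have "(c',y') \<in> V'" "(oth c', z) \<in> V'" using step(2) c'(1) oth[OF c'(1)] V'_def by auto
    ultimately have "(\<lambda>x y. E' x y \<and> x \<in> V' \<and> y \<in> V')\<^sup>*\<^sup>* (a,y) (oth c',z)"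
      using c'(2) by (simp add: rtranclp.rtrancl_into_rtrancl)
    thus ?case using oth[OF c'(1)] by blast
  qed
  show ?thesis
    unfolding pseudoforest_def
  proof (intro allI impI, elim conjE)
    fix xs ys assume cx: "is_cycle V2 E2 xs" and cy: "is_cycle V2 E2 ys"
      and con: "connected_in V2 E2 (hd xs) (hd ys)"
    have ne: "xs \<noteq> []" "ys \<noteq> []" using cyc_basic[OF cx] cyc_basic[OF cy] by auto
    obtain c' where c': "c' \<in> {a,b}" "(\<lambda>x y. E' x y \<and> x \<in> V' \<and> y \<in> V')\<^sup>*\<^sup>* (a, hd xs) (c', hd ys)"
      using conn con unfolding connected_in_def by blast
    have E'e: "\<And>p q. E' p q \<longleftrightarrow> E1' (fst p) (fst q) \<and> E2 (snd p) (snd q)" using E'_def by simp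
    have a1: "a \<in> {a,b}" by simp
    have seta: "{a, oth a} = {a,b}" using oth_def by auto
    have lx: "is_cycle V' E' (lift a (oth a) xs)"
      by (rule lift_cycle[OF cx]) (use oth[OF a1] seta V'_def E'e in auto)
    have setc: "{c', oth c'} = {a,b}" using c'(1) oth_def anb by auto
    have ly: "is_cycle V' E' (lift c' (oth c') ys)"
      by (rule lift_cycle[OF cy]) (use oth[OF c'(1)] setc V'_def E'e in auto)
    have "connected_in V' E' (hd (lift a (oth a) xs)) (hd (lift c' (oth c') ys))"
      unfolding connected_in_def lift_hd[OF ne(1)] lift_hd[OF ne(2)]
      using con c' graph_in[OF gH] unfolding connected_in_def V'_def by auto
    hence "cycle_edges (lift a (oth a) xs) = cycle_edges (lift c' (oth c') ys)"
      using pf' lx ly unfolding pseudoforest_def by blast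
    thus "cycle_edges xs = cycle_edges ys"
      using lift_edges[OF cx, of a "oth a"] lift_edges[OF cy, of c' "oth c'"] by metis
  qed
qed


definition pathlist :: "('a \<Rightarrow> 'a \<Rightarrow> bool) \<Rightarrow> 'a set \<Rightarrow> 'a list \<Rightarrow> bool" where
  "pathlist E S xs \<longleftrightarrow> xs \<noteq> [] \<and> distinct xs \<and> set xs = S \<and>
     (\<forall>u\<in>S. \<forall>v\<in>S. E u v \<longleftrightarrow>
        (\<exists>i. Suc i < length xs \<and> ((u = xs!i \<and> v = xs!Suc i) \<or> (v = xs!i \<and> u = xs!Suc i))))"

lemma induces_path_pathlist: "induces_path E S \<longleftrightarrow> (\<exists>xs. pathlist E S xs)"
  unfolding induces_path_def pathlist_def by blast

lemma lf_pos:
  assumes g: "graph V E" and lf: "linear_forest k V E"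
  shows "\<exists>pos. (\<forall>u\<in>V. pos u < k) \<and> (\<forall>u v. E u v \<longrightarrow> pos v = Suc (pos u) \<or> pos u = Suc (pos v))
     \<and> (\<forall>u v w. E u v \<longrightarrow> E u w \<longrightarrow> pos v = pos w \<longrightarrow> v = w)"
proof -
  obtain P where Pall: "\<Union>P = V \<and> (\<forall>S\<in>P. S \<noteq> {}) \<and>
     (\<forall>S\<in>P. \<forall>T\<in>P. S \<noteq> T \<longrightarrow> S \<inter> T = {}) \<and>
     (\<forall>S\<in>P. induces_path E S \<and> card S \<le> k) \<and>
     (\<forall>S\<in>P. \<forall>T\<in>P. S \<noteq> T \<longrightarrow> (\<forall>u\<in>S. \<forall>v\<in>T. \<not> E u v))"
    using lf unfolding linear_forest_def by (elim exE) (rule that)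
  note PV = conjunct1[OF Pall]
  note dj = conjunct1[OF conjunct2[OF conjunct2[OF Pall]]]
  note ip = conjunct1[OF conjunct2[OF conjunct2[OF conjunct2[OF Pall]]]]
  note ne = conjunct2[OF conjunct2[OF conjunct2[OF conjunct2[OF Pall]]]]
  define L where "L S = (SOME xs. pathlist E S xs)" for S
  have L: "\<And>S. S \<in> P \<Longrightarrow> pathlist E S (L S)"
    using ip unfolding L_def induces_path_pathlist by (metis someI_ex)
  define pos where "pos u = (SOME i. \<exists>S\<in>P. u \<in> S \<and> i < length (L S) \<and> L S ! i = u)" for u
  have part: "\<And>u S T. S \<in> P \<Longrightarrow> T \<in> P \<Longrightarrow> u \<in> S \<Longrightarrow> u \<in> T \<Longrightarrow> S = T" using dj by blast
  have posS: "pos u < length (L S) \<and> L S ! pos u = u" if S: "S \<in> P" "u \<in> S" for u S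
  proof -
    have "u \<in> set (L S)" using L[OF S(1)] S(2) unfolding pathlist_def by blast
    then obtain i where "i < length (L S)" "L S ! i = u" by (metis in_set_conv_nth)
    hence "\<exists>i. \<exists>S\<in>P. u \<in> S \<and> i < length (L S) \<and> L S ! i = u" using S by blast
    hence "\<exists>T\<in>P. u \<in> T \<and> pos u < length (L T) \<and> L T ! pos u = u"
      unfolding pos_def by (rule someI_ex)
    then obtain T where "T \<in> P" "u \<in> T" "pos u < length (L T)" "L T ! pos u = u" by blast
    thus ?thesis using part[OF S(1) _ S(2)] by blast
  qed
  have inV: "\<And>u. u \<in> V \<Longrightarrow> \<exists>S\<in>P. u \<in> S" using PV by blast
  have edge_part: "\<And>u v S. E u v \<Longrightarrow> S \<in> P \<Longrightarrow> u \<in> S \<Longrightarrow> v \<in> S"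
  proof -
    fix u v S assume e: "E u v" and S: "S \<in> P" "u \<in> S"
    obtain T where T: "T \<in> P" "v \<in> T" using inV graph_in[OF g e] by blast
    show "v \<in> S" using ne S T e by metis
  qed
  show ?thesis
  proof (intro exI[of _ pos] conjI allI impI ballI)
    fix u assume u: "u \<in> V"
    then obtain S where S: "S \<in> P" "u \<in> S" using inV by blast
    have "length (L S) = card S" using L[OF S(1)] unfolding pathlist_def by (metis distinct_card)
    thus "pos u < k" using posS[OF S] ip S by fastforce
  next
    fix u v assume e: "E u v"
    obtain S where S: "S \<in> P" "u \<in> S" using inV graph_in[OF g e] by blast
    have vS: "v \<in> S" using edge_part[OF e S] .
    have pl: "pathlist E S (L S)" using L[OF S(1)] .
    then obtain i where i: "Suc i < length (L S)" "(u = L S!i \<and> v = L S!Suc i) \<or> (v = L S!i \<and> u = L S!Suc i)"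
      using e S(2) vS unfolding pathlist_def by blast
    have d: "distinct (L S)" using pl unfolding pathlist_def by blast
    have pu: "pos u < length (L S)" "L S ! pos u = u" and pv: "pos v < length (L S)" "L S ! pos v = v"
      using posS[OF S] posS[OF S(1) vS] by auto
    from i(2) show "pos v = Suc (pos u) \<or> pos u = Suc (pos v)"
    proof
      assume "u = L S!i \<and> v = L S!Suc i"
      hence "pos u = i" "pos v = Suc i" using pu pv i(1) d nth_eq_iff_index_eq by (metis Suc_lessD)+
      thus ?thesis by simp
    next
      assume "v = L S!i \<and> u = L S!Suc i"
      hence "pos v = i" "pos u = Suc i" using pu pv i(1) d nth_eq_iff_index_eq by (metis Suc_lessD)+
      thus ?thesis by simp
    qed
  next
    fix u v w assume e: "E u v" "E u w" and pp: "pos v = pos w"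
    obtain S where S: "S \<in> P" "u \<in> S" using inV graph_in[OF g e(1)] by blast
    have "v \<in> S" "w \<in> S" using edge_part[OF e(1) S] edge_part[OF e(2) S] by auto
    thus "v = w" using posS[OF S(1)] pp by metis
  qed
qed

lemma lf_pos_nb:
  assumes g: "graph V E" and lf: "linear_forest k V E"
  obtains pos where "\<And>u. u\<in>V \<Longrightarrow> pos u < k" "\<And>u v. E u v \<Longrightarrow> pos v = Suc (pos u) \<or> pos u = Suc (pos v)"
     "\<And>u v w. E u v \<Longrightarrow> E u w \<Longrightarrow> pos v = pos w \<Longrightarrow> v = w"
proof -
  obtain pos where p: "(\<forall>u\<in>V. pos u < k) \<and> (\<forall>u v. E u v \<longrightarrow> pos v = Suc (pos u) \<or> pos u = Suc (pos v))
     \<and> (\<forall>u v w. E u v \<longrightarrow> E u w \<longrightarrow> pos v = pos w \<longrightarrow> v = w)"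
    using lf_pos[OF g lf] by blast
  show thesis
    apply (rule that[of pos])
    using p apply blast
    using p apply blast
    using p apply blast
    done
qed

lemma lf1_edgeless:
  assumes g: "graph V E" and lf: "linear_forest 1 V E"
  shows "\<not> E u v"
proof
  assume e: "E u v"
  obtain pos where p: "(\<forall>u\<in>V. pos u < 1) \<and> (\<forall>u v. E u v \<longrightarrow> pos v = Suc (pos u) \<or> pos u = Suc (pos v))
     \<and> (\<forall>u v w. E u v \<longrightarrow> E u w \<longrightarrow> pos v = pos w \<longrightarrow> v = w)"
    using lf_pos[OF g lf] by blast
  have "pos u < 1" "pos v < 1" using p graph_in[OF g e] by auto
  moreover have "pos v = Suc (pos u) \<or> pos u = Suc (pos v)" using p e by blast
  ultimately show False by auto
qed

lemma lf2_uniq: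
  assumes g: "graph V E" and lf: "linear_forest 2 V E" and e: "E u v" "E u w"
  shows "v = w"
proof -
  obtain pos where p: "(\<forall>u\<in>V. pos u < 2) \<and> (\<forall>u v. E u v \<longrightarrow> pos v = Suc (pos u) \<or> pos u = Suc (pos v))
     \<and> (\<forall>u v w. E u v \<longrightarrow> E u w \<longrightarrow> pos v = pos w \<longrightarrow> v = w)"
    using lf_pos[OF g lf] by blast
  have "pos u < 2" "pos v < 2" "pos w < 2" using p graph_in[OF g e(1)] graph_in[OF g e(2)] by auto
  moreover have "pos v = Suc (pos u) \<or> pos u = Suc (pos v)" "pos w = Suc (pos u) \<or> pos u = Suc (pos w)"
    using p e by blast+
  ultimately have "pos v = pos w" by auto
  thus ?thesis using p e by blast
qed


definition walk :: "('a \<Rightarrow> 'a \<Rightarrow> bool) \<Rightarrow> 'a list \<Rightarrow> bool" where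
  "walk E xs \<longleftrightarrow> (\<forall>i. Suc i < length xs \<longrightarrow> E (xs!i) (xs!Suc i))"

lemma walk_reach:
  assumes w: "walk E xs" and ij: "i \<le> j" "j < length xs"
  shows "E\<^sup>*\<^sup>* (xs!i) (xs!j)"
  using ij
proof (induction j)
  case 0 thus ?case by simp
next
  case (Suc j)
  show ?case
  proof (cases "i = Suc j")
    case True thus ?thesis by simp
  next
    case False
    hence "E\<^sup>*\<^sup>* (xs!i) (xs!j)" using Suc by simp
    moreover have "E (xs!j) (xs!Suc j)" using w Suc.prems unfolding walk_def by simp
    ultimately show ?thesis by (rule rtranclp.rtrancl_into_rtrancl)
  qed
qed

lemma rt_sym:
  assumes s: "\<And>x y. E x y \<Longrightarrow> E y x" and r: "E\<^sup>*\<^sup>* x y"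
  shows "E\<^sup>*\<^sup>* y x"
  using r by (induction rule: rtranclp_induct) (auto intro: converse_rtranclp_into_rtranclp s)

lemma walk_ConsI:
  assumes "walk E xs" "xs \<noteq> []" "E w (hd xs)"
  shows "walk E (w#xs)"
  unfolding walk_def
proof (intro allI impI)
  fix i assume i: "Suc i < length (w#xs)"
  show "E ((w#xs)!i) ((w#xs)!Suc i)"
  proof (cases i)
    case 0 thus ?thesis using assms by (simp add: hd_conv_nth)
  next
    case (Suc i') thus ?thesis using assms(1) i unfolding walk_def by simp
  qed
qed

lemma walk_snocI:
  assumes "walk E xs" "xs \<noteq> []" "E (last xs) w"
  shows "walk E (xs @ [w])"
  unfolding walk_def
proof (intro allI impI)
  fix i assume i: "Suc i < length (xs @ [w])"
  show "E ((xs @ [w])!i) ((xs @ [w])!Suc i)"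
  proof (cases "Suc i < length xs")
    case True thus ?thesis using assms(1) unfolding walk_def by (simp add: nth_append)
  next
    case False
    hence si: "Suc i = length xs" using i by simp
    hence "i = length xs - 1" by simp
    hence "(xs @ [w])!i = last xs" using assms(2) si by (simp add: nth_append last_conv_nth)
    moreover have "(xs @ [w])!Suc i = w" using si by (simp add: nth_append)
    ultimately show ?thesis using assms(3) by simp
  qed
qed

lemma walk_chord_cycle:
  assumes w: "walk E xs" and d: "distinct xs" and sV: "set xs \<subseteq> V"
    and s: "\<And>x y. E x y \<Longrightarrow> E y x"
    and ij: "i + 2 \<le> j" "j < length xs" and e: "E (xs!i) (xs!j)"
  shows "is_cycle V E (map (\<lambda>t. xs!(i+t)) [0..<j-i+1])"
proof -
  define cs where "cs = map (\<lambda>t. xs!(i+t)) [0..<j-i+1]"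
  define n where "n = j - i + 1"
  have ln: "length cs = n" unfolding cs_def n_def by simp
  have n3: "3 \<le> n" using ij n_def by simp
  have csn: "\<And>t. t < n \<Longrightarrow> cs!t = xs!(i+t)" unfolding cs_def n_def by (simp del: upt_Suc)
  have "distinct cs"
  proof -
    have "inj_on (\<lambda>t. xs!(i+t)) {0..<j-i+1}"
    proof (rule inj_onI)
      fix a b assume ab: "a \<in> {0..<j-i+1}" "b \<in> {0..<j-i+1}" "xs!(i+a) = xs!(i+b)"
      hence "i + a < length xs" "i + b < length xs" using ij by auto
      thus "a = b" using ab(3) d nth_eq_iff_index_eq by fastforce
    qed
    thus ?thesis unfolding cs_def by (simp add: distinct_map del: upt_Suc)
  qed
  moreover have "set cs \<subseteq> V" using sV ij unfolding cs_def by auto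
  moreover have "\<forall>t < length cs. E (cs!t) (cs!(Suc t mod length cs))"
  proof (intro allI impI)
    fix t assume t: "t < length cs"
    show "E (cs!t) (cs!(Suc t mod length cs))"
    proof (cases "Suc t < n")
      case True
      hence "Suc t mod length cs = Suc t" using ln by simp
      moreover have "E (xs!(i+t)) (xs!Suc (i+t))" using w True ij n_def unfolding walk_def by simp
      ultimately show ?thesis using csn[OF True] csn t ln True by simp
    next
      case False
      hence tt: "t = n - 1" "Suc t = n" using t ln by auto
      hence "Suc t mod length cs = 0" using ln by simp
      moreover have "cs!t = xs!j" using csn t ln tt ij n_def by simp
      moreover have "cs!0 = xs!i" using csn n3 by simp
      ultimately show ?thesis using s[OF e] by simp
    qed
  qed
  ultimately have "is_cycle V E cs" using n3 ln unfolding is_cycle_def by simp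
  thus ?thesis unfolding cs_def .
qed

lemma exact_adj:
  assumes w: "walk E xs" and d: "distinct xs" and sV: "set xs \<subseteq> V"
    and s: "\<And>x y. E x y \<Longrightarrow> E y x" and ir: "\<And>x. \<not> E x x"
    and acyc: "\<forall>cs. \<not> is_cycle V E cs"
    and ij: "i < length xs" "j < length xs" and e: "E (xs!i) (xs!j)"
  shows "j = Suc i \<or> i = Suc j"
proof -
  have "i \<noteq> j" using e ir by metis
  show ?thesis
  proof (rule ccontr)
    assume "\<not> (j = Suc i \<or> i = Suc j)"
    hence "i + 2 \<le> j \<or> j + 2 \<le> i" using \<open>i \<noteq> j\<close> by auto
    thus False
    proof
      assume "i + 2 \<le> j" thus False using walk_chord_cycle[OF w d sV s _ ij(2) e] acyc by blast
    next
      assume "j + 2 \<le> i" thus False using walk_chord_cycle[OF w d sV s _ ij(1) s[OF e]] acyc by blast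
    qed
  qed
qed


lemma ex_max_len:
  assumes "finite A" "A \<noteq> {}"
  obtains xs where "xs \<in> A" "\<forall>ys\<in>A. length ys \<le> length (xs::'a list)"
proof -
  let ?m = "Max (length ` A)"
  have "?m \<in> length ` A" using assms by simp
  then obtain xs where xs: "xs \<in> A" "length xs = ?m" by auto
  have "\<forall>ys\<in>A. length ys \<le> ?m" using assms by simp
  thus thesis using that xs by simp
qed

lemma max_path_closed:
  assumes g: "graph V E"
    and noclaw: "\<forall>c x y z. E c x \<and> E c y \<and> E c z \<longrightarrow> x = y \<or> y = z \<or> x = z"
    and xs: "distinct xs" "walk E xs" "v \<in> set xs" "set xs \<subseteq> V"
    and mx: "\<forall>ys. distinct ys \<and> walk E ys \<and> v \<in> set ys \<and> set ys \<subseteq> V \<longrightarrow> length ys \<le> length xs"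
    and x: "x \<in> set xs" and e: "E x w"
  shows "w \<in> set xs"
proof (rule ccontr)
  assume wn: "w \<notin> set xs"
  have s: "\<And>x y. E x y \<Longrightarrow> E y x" using graph_sym[OF g] by blast
  have wV: "w \<in> V" using graph_in[OF g e] by simp
  have nen: "xs \<noteq> []" using x by auto
  obtain i where i: "i < length xs" "x = xs!i" using x by (metis in_set_conv_nth)
  show False
  proof (cases "i = 0")
    case True
    have "walk E (w#xs)" using walk_ConsI[OF xs(2) nen] s[OF e] i True by (simp add: hd_conv_nth nen)
    hence "length (w#xs) \<le> length xs" using mx[rule_format, of "w#xs"] xs wn wV by simp
    thus False by simp
  next
    case i0: False
    show False
    proof (cases "i = length xs - 1")
      case True
      have "last xs = x" using i True nen by (simp add: last_conv_nth)
      hence "walk E (xs @ [w])" using walk_snocI[OF xs(2) nen] e by simp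
      hence "length (xs @ [w]) \<le> length xs" using mx[rule_format, of "xs @ [w]"] xs wn wV by simp
      thus False by simp
    next
      case False
      have i1: "Suc i < length xs" "i - 1 < length xs" "Suc (i - 1) = i" using i i0 False by auto
      have a: "E x (xs!Suc i)" using xs(2) i1 i unfolding walk_def by simp
      have "Suc (i-1) < length xs" using i1 by simp
      hence "E (xs!(i-1)) (xs!Suc (i-1))" using xs(2) unfolding walk_def by blast
      hence b: "E x (xs!(i-1))" using s i i1(3) by simp
      have "xs!Suc i \<noteq> xs!(i-1)" using xs(1) i1 nth_eq_iff_index_eq by fastforce
      moreover have "xs!Suc i \<noteq> w" "xs!(i-1) \<noteq> w" using wn i1 nth_mem by metis+
      ultimately show False using noclaw a b e by metis
    qed
  qed
qed

lemma lf_intro: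
  assumes g: "graph V E" and k: "1 \<le> k"
    and noclaw: "\<forall>c x y z. E c x \<and> E c y \<and> E c z \<longrightarrow> x = y \<or> y = z \<or> x = z"
    and acyc: "\<forall>cs. \<not> is_cycle V E cs"
    and nopath: "\<forall>xs. distinct xs \<and> walk E xs \<longrightarrow> length xs \<le> k"
  shows "linear_forest k V E"
proof -
  have s: "\<And>x y. E x y \<Longrightarrow> E y x" using graph_sym[OF g] by blast
  have ir: "\<And>x. \<not> E x x" using graph_irr[OF g] by blast
  have fV: "finite V" using graph_fin[OF g] .
  define PS where "PS v = {xs. distinct xs \<and> walk E xs \<and> v \<in> set xs \<and> set xs \<subseteq> V}" for v
  have PSfin: "finite (PS v)" for v
  proof -
    have "PS v \<subseteq> {xs. set xs \<subseteq> V \<and> length xs \<le> card V}"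
      unfolding PS_def using fV by (auto simp: distinct_card[symmetric] intro: card_mono)
    thus ?thesis using finite_lists_length_le[OF fV] finite_subset by blast
  qed
  have PSne: "v \<in> V \<Longrightarrow> PS v \<noteq> {}" for v
  proof -
    assume "v \<in> V"
    hence "[v] \<in> PS v" unfolding PS_def walk_def by simp
    thus ?thesis by blast
  qed
  define M where "M v = (SOME xs. xs \<in> PS v \<and> (\<forall>ys\<in>PS v. length ys \<le> length xs))" for v
  have M: "M v \<in> PS v \<and> (\<forall>ys\<in>PS v. length ys \<le> length (M v))" if vV: "v \<in> V" for v
  proof -
    obtain xs where "xs \<in> PS v" "\<forall>ys\<in>PS v. length ys \<le> length xs"
      using ex_max_len[OF PSfin PSne[OF vV]] by blast
    hence "\<exists>xs. xs \<in> PS v \<and> (\<forall>ys\<in>PS v. length ys \<le> length xs)" by blast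
    thus ?thesis unfolding M_def by (rule someI_ex)
  qed
  have Mp: "distinct (M v)" "walk E (M v)" "v \<in> set (M v)" "set (M v) \<subseteq> V"
    "\<forall>ys. distinct ys \<and> walk E ys \<and> v \<in> set ys \<and> set ys \<subseteq> V \<longrightarrow> length ys \<le> length (M v)"
    if "v \<in> V" for v
    using M[OF that] unfolding PS_def by auto
  define comp where "comp v = {w. E\<^sup>*\<^sup>* v w}" for v
  have reach_set: "E\<^sup>*\<^sup>* x y" if xy: "x \<in> set (M v)" "y \<in> set (M v)" "v \<in> V" for x y v
  proof -
    obtain i where i: "i < length (M v)" "x = M v ! i" using xy(1) by (metis in_set_conv_nth)
    obtain j where j: "j < length (M v)" "y = M v ! j" using xy(2) by (metis in_set_conv_nth)
    show ?thesis
    proof (cases "i \<le> j")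
      case True thus ?thesis using walk_reach[OF Mp(2)[OF xy(3)] True j(1)] i j by simp
    next
      case False
      hence "E\<^sup>*\<^sup>* y x" using walk_reach[OF Mp(2)[OF xy(3)], of j i] i j by simp
      thus ?thesis using rt_sym[of E, OF s] by blast
    qed
  qed
  have comp_eq: "comp v = set (M v)" if v: "v \<in> V" for v
  proof
    show "set (M v) \<subseteq> comp v" using reach_set Mp(3)[OF v] v unfolding comp_def by blast
    show "comp v \<subseteq> set (M v)"
    proof
      fix w assume "w \<in> comp v"
      hence "E\<^sup>*\<^sup>* v w" unfolding comp_def by simp
      thus "w \<in> set (M v)"
      proof (induction rule: rtranclp_induct)
        case base thus ?case using Mp(3)[OF v] .
      next
        case (step y z)
        thus ?case using max_path_closed[OF g noclaw Mp(1-4)[OF v] Mp(5)[OF v]] by blast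
      qed
    qed
  qed
  have comp_same: "comp x = comp v" if "x \<in> comp v" for x v
  proof -
    have xv: "E\<^sup>*\<^sup>* v x" using that comp_def by simp
    have vx: "E\<^sup>*\<^sup>* x v" using rt_sym[of E, OF s xv] .
    show ?thesis unfolding comp_def using xv vx by (auto intro: rtranclp_trans)
  qed
  have compV: "comp v \<subseteq> V" if "v \<in> V" for v using comp_eq[OF that] Mp(4)[OF that] by simp
  have vcomp: "v \<in> comp v" for v unfolding comp_def by simp
  have ipk: "induces_path E S \<and> card S \<le> k" if SP: "S \<in> comp ` V" for S
  proof -
    obtain v where v: "v \<in> V" "S = comp v" using SP by blast
    have pl: "pathlist E S (M v)"
      unfolding pathlist_def
    proof (intro conjI ballI)
      show "M v \<noteq> []" using Mp(3)[OF v(1)] by auto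
      show "distinct (M v)" using Mp(1)[OF v(1)] .
      show "set (M v) = S" using comp_eq[OF v(1)] v(2) by simp
      fix u w assume uw: "u \<in> S" "w \<in> S"
      then obtain i j where ij: "i < length (M v)" "j < length (M v)" "u = M v ! i" "w = M v ! j"
        using comp_eq[OF v(1)] v(2) by (metis in_set_conv_nth)
      show "E u w \<longleftrightarrow> (\<exists>i. Suc i < length (M v) \<and> ((u = M v!i \<and> w = M v!Suc i) \<or> (w = M v!i \<and> u = M v!Suc i)))"
      proof
        assume "E u w"
        hence "j = Suc i \<or> i = Suc j"
          using exact_adj[OF Mp(2)[OF v(1)] Mp(1)[OF v(1)] Mp(4)[OF v(1)] s ir acyc ij(1,2)] ij by simp
        thus "\<exists>i. Suc i < length (M v) \<and> ((u = M v!i \<and> w = M v!Suc i) \<or> (w = M v!i \<and> u = M v!Suc i))"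
          using ij by blast
      next
        assume "\<exists>i. Suc i < length (M v) \<and> ((u = M v!i \<and> w = M v!Suc i) \<or> (w = M v!i \<and> u = M v!Suc i))"
        thus "E u w" using Mp(2)[OF v(1)] s unfolding walk_def by blast
      qed
    qed
    hence "induces_path E S" unfolding induces_path_pathlist by blast
    moreover have "card S = length (M v)" using comp_eq[OF v(1)] v(2) Mp(1)[OF v(1)] by (simp add: distinct_card)
    moreover have "length (M v) \<le> k" using nopath Mp(1,2)[OF v(1)] by simp
    ultimately show ?thesis by simp
  qed
  have noe: "\<not> E u w" if ST: "S \<in> comp ` V" "T \<in> comp ` V" "S \<noteq> T" and uw: "u \<in> S" "w \<in> T" for S T u w
  proof
    assume e: "E u w"
    obtain a b where ab: "S = comp a" "T = comp b" using ST by blast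
    have "w \<in> comp a" using uw e ab unfolding comp_def by (auto intro: rtranclp.rtrancl_into_rtrancl)
    hence "comp w = comp a" using comp_same by blast
    moreover have "comp w = comp b" using comp_same uw ab by blast
    ultimately show False using ab ST by simp
  qed
  show ?thesis
    unfolding linear_forest_def
  proof (rule exI[of _ "comp ` V"], intro conjI)
    show "\<Union>(comp ` V) = V" using compV vcomp by blast
    show "\<forall>S\<in>comp ` V. S \<noteq> {}" using vcomp by blast
    show "\<forall>S\<in>comp ` V. \<forall>T\<in>comp ` V. S \<noteq> T \<longrightarrow> S \<inter> T = {}" using comp_same by blast
    show "\<forall>S\<in>comp ` V. induces_path E S \<and> card S \<le> k" using ipk by blast
    show "\<forall>S\<in>comp ` V. \<forall>T\<in>comp ` V. S \<noteq> T \<longrightarrow> (\<forall>u\<in>S. \<forall>v\<in>T. \<not> E u v)" using noe by blast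
  qed
qed


definition porient :: "('a \<Rightarrow> 'a \<Rightarrow> bool) \<Rightarrow> ('a \<Rightarrow> 'a \<Rightarrow> bool) \<Rightarrow> bool" where
  "porient E D \<longleftrightarrow> (\<forall>x y. D x y \<longrightarrow> E x y) \<and> (\<forall>x y. D x y \<longrightarrow> \<not> D y x) \<and> out1 D"

lemma flip:
  assumes por: "porient E D" and s: "\<And>x y. E x y \<Longrightarrow> E y x" and ir: "\<And>x. \<not> E x x"
    and xs: "distinct xs" "walk D xs" "xs \<noteq> []" "hd xs = u"
    and sink: "\<forall>y. \<not> D (last xs) y"
    and e: "E u v" "\<not> D u v" "\<not> D v u"
  shows "\<exists>D'. porient E D' \<and> (\<forall>x y. D x y \<longrightarrow> D' x y \<or> D' y x) \<and> D' u v"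
proof -
  define n where "n = length xs"
  have DE: "\<And>x y. D x y \<Longrightarrow> E x y" and Das: "\<And>x y. D x y \<Longrightarrow> \<not> D y x"
    and Du: "\<And>x y z. D x y \<Longrightarrow> D x z \<Longrightarrow> y = z"
    using por unfolding porient_def out1_def by blast+
  have n0: "0 < n" using xs(3) n_def by simp
  have u0: "xs!0 = u" using xs(3,4) by (simp add: hd_conv_nth)
  have uv: "u \<noteq> v" using e(1) ir by metis
  have wk: "\<And>m. Suc m < n \<Longrightarrow> D (xs!m) (xs!Suc m)" using xs(2) n_def unfolding walk_def by blast
  have idx: "\<And>a b. a < n \<Longrightarrow> b < n \<Longrightarrow> xs!a = xs!b \<Longrightarrow> a = b"
    using xs(1) n_def nth_eq_iff_index_eq by metis
  have lastn: "last xs = xs!(n-1)" using xs(3) n_def by (simp add: last_conv_nth)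
  define D' where "D' x y \<longleftrightarrow> (if x \<in> set xs then (x = u \<and> y = v) \<or> (\<exists>m. 0 < m \<and> m < n \<and> x = xs!m \<and> y = xs!(m-1)) else D x y)" for x y
  have cOut: "\<And>x y. x \<notin> set xs \<Longrightarrow> D' x y \<longleftrightarrow> D x y" unfolding D'_def by simp
  have cIn: "D' (xs!m) y \<longleftrightarrow> (m = 0 \<and> y = v) \<or> (0 < m \<and> y = xs!(m-1))" if m: "m < n" for m y
  proof -
    have inn: "xs!m \<in> set xs" using m n_def by simp
    have "D' (xs!m) y \<longleftrightarrow> (xs!m = u \<and> y = v) \<or> (\<exists>m'. 0 < m' \<and> m' < n \<and> xs!m = xs!m' \<and> y = xs!(m'-1))"
      unfolding D'_def using inn by simp
    also have "\<dots> \<longleftrightarrow> (m = 0 \<and> y = v) \<or> (0 < m \<and> y = xs!(m-1))"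
      using idx[OF m] u0 n0 m by (metis gr0I)
    finally show ?thesis .
  qed
  have inS: "\<And>x. x \<in> set xs \<Longrightarrow> \<exists>m<n. x = xs!m" using n_def by (metis in_set_conv_nth)
  have out1': "out1 D'"
    unfolding out1_def
  proof (intro allI impI)
    fix x y z assume a: "D' x y" "D' x z"
    show "y = z"
    proof (cases "x \<in> set xs")
      case True
      then obtain m where m: "m < n" "x = xs!m" using inS by blast
      thus ?thesis using a cIn[OF m(1)] by auto
    next
      case False thus ?thesis using a cOut Du by metis
    qed
  qed
  have sub': "\<And>x y. D' x y \<Longrightarrow> E x y"
  proof -
    fix x y assume a: "D' x y"
    show "E x y"
    proof (cases "x \<in> set xs")
      case True
      then obtain m where m: "m < n" "x = xs!m" using inS by blast
      show ?thesis
      proof (cases "m = 0")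
        case True thus ?thesis using a m cIn[OF m(1)] u0 e(1) by auto
      next
        case False
        hence "y = xs!(m-1)" using a m cIn[OF m(1)] by auto
        moreover have "D (xs!(m-1)) (xs!m)" using wk[of "m-1"] False m by simp
        ultimately show ?thesis using m s DE by blast
      qed
    next
      case False thus ?thesis using a cOut DE by metis
    qed
  qed
  have as': "\<And>x y. D' x y \<Longrightarrow> \<not> D' y x"
  proof
    fix x y assume a: "D' x y" "D' y x"
    show False
    proof (cases "x \<in> set xs")
      case xin: True
      then obtain m where m: "m < n" "x = xs!m" using inS by blast
      show False
      proof (cases "y \<in> set xs")
        case True
        then obtain m' where m': "m' < n" "y = xs!m'" using inS by blast
        have A: "(m = 0 \<and> y = v) \<or> (0 < m \<and> y = xs!(m-1))" using a(1) m cIn by auto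
        have B: "(m' = 0 \<and> x = v) \<or> (0 < m' \<and> x = xs!(m'-1))" using a(2) m' cIn by auto
        have d01: "D u (xs!1)" if "1 < n" using wk[of 0] that u0 by simp
        show False
        proof (cases "m = 0")
          case m0: True
          show False
          proof (cases "m' = 0")
            case True thus False using A B m0 m m' uv u0 by auto
          next
            case False
            hence "x = xs!(m'-1)" using B by auto
            hence "m'-1 = 0" using idx m m' m0 by (metis less_imp_diff_less)
            hence "m' = 1" using False by simp
            thus False using A m0 m' d01 e(2) u0 m by auto
          qed
        next
          case False
          hence yv: "y = xs!(m-1)" using A by auto
          hence mm: "m' = m - 1" using idx m m' by (metis less_imp_diff_less)
          show False
          proof (cases "m' = 0")
            case True
            hence "m = 1" using mm False by simp
            hence "x = xs!1" "y = u" using m yv u0 by auto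
            moreover have "x = v" using B True by auto
            ultimately show False using d01 e(2) m \<open>m = 1\<close> by auto
          next
            case False2: False
            hence "x = xs!(m'-1)" using B by auto
            hence "m = m' - 1" using idx m m' by (metis less_imp_diff_less)
            thus False using mm False by simp
          qed
        qed
      next
        case False
        hence dyx: "D y x" using a(2) cOut by blast
        have "(m = 0 \<and> y = v) \<or> (0 < m \<and> y = xs!(m-1))" using a(1) m cIn by auto
        moreover have "xs!(m-1) \<in> set xs" using m n_def by simp
        ultimately have "m = 0 \<and> y = v" using False m by auto
        thus False using dyx u0 m e(3) by auto
      qed
    next
      case xout: False
      hence dxy: "D x y" using a(1) cOut by blast
      show False
      proof (cases "y \<in> set xs")
        case True
        then obtain m where m: "m < n" "y = xs!m" using inS by blast
        have "(m = 0 \<and> x = v) \<or> (0 < m \<and> x = xs!(m-1))" using a(2) m cIn by auto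
        moreover have "xs!(m-1) \<in> set xs" using m n_def by simp
        ultimately have "m = 0 \<and> x = v" using xout m by auto
        thus False using dxy u0 m e(3) by auto
      next
        case False thus False using a cOut Das xout by metis
      qed
    qed
  qed
  have cov: "\<And>x y. D x y \<Longrightarrow> D' x y \<or> D' y x"
  proof -
    fix x y assume d: "D x y"
    show "D' x y \<or> D' y x"
    proof (cases "x \<in> set xs")
      case True
      then obtain m where m: "m < n" "x = xs!m" using inS by blast
      have "m \<noteq> n - 1" using sink d m lastn by metis
      hence sm: "Suc m < n" using m by simp
      hence "y = xs!Suc m" using wk d m Du by metis
      hence "D' y x" using cIn[OF sm] m by simp
      thus ?thesis by blast
    next
      case False thus ?thesis using d cOut by blast
    qed
  qed
  have "D' u v" using cIn[OF n0] u0 by simp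
  moreover have "porient E D'" unfolding porient_def using sub' as' out1' by blast
  ultimately show ?thesis using cov by blast
qed


lemma max_dpath:
  assumes fin: "finite V" and uV: "u \<in> V" and DV: "\<And>x y. D x y \<Longrightarrow> y \<in> V"
  obtains xs where "distinct xs" "walk D xs" "xs \<noteq> []" "hd xs = u" "set xs \<subseteq> V"
    "\<forall>y. D (last xs) y \<longrightarrow> y \<in> set xs"
proof -
  define QS where "QS = {xs. distinct xs \<and> walk D xs \<and> xs \<noteq> [] \<and> hd xs = u \<and> set xs \<subseteq> V}"
  have "QS \<subseteq> {xs. set xs \<subseteq> V \<and> length xs \<le> card V}"
    unfolding QS_def using fin by (auto simp: distinct_card[symmetric] intro: card_mono)
  hence fQ: "finite QS" using finite_lists_length_le[OF fin] finite_subset by blast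
  have "[u] \<in> QS" unfolding QS_def walk_def using uV by simp
  hence nQ: "QS \<noteq> {}" by blast
  obtain xs where xs: "xs \<in> QS" "\<forall>ys\<in>QS. length ys \<le> length xs" using ex_max_len[OF fQ nQ] by blast
  have p: "distinct xs" "walk D xs" "xs \<noteq> []" "hd xs = u" "set xs \<subseteq> V" using xs(1) QS_def by auto
  have "\<forall>y. D (last xs) y \<longrightarrow> y \<in> set xs"
  proof (intro allI impI)
    fix y assume d: "D (last xs) y"
    show "y \<in> set xs"
    proof (rule ccontr)
      assume yn: "y \<notin> set xs"
      have "xs @ [y] \<in> QS" unfolding QS_def
        using p yn walk_snocI[OF p(2) p(3) d] DV[OF d] by simp
      thus False using xs(2) by fastforce
    qed
  qed
  thus thesis using that p by blast
qed

lemma loop_cycle: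
  assumes por: "porient E D" and xs: "distinct xs" "walk D xs" "xs \<noteq> []" "set xs \<subseteq> V"
    and a: "a < length xs" "D (last xs) (xs!a)"
  shows "is_cycle V E (drop a xs) \<and> (\<forall>t < length (drop a xs). D (drop a xs!t) (drop a xs!(Suc t mod length (drop a xs))))"
proof -
  define cs where "cs = drop a xs"
  define n where "n = length xs"
  define l where "l = length cs"
  have DE: "\<And>x y. D x y \<Longrightarrow> E x y" and Das: "\<And>x y. D x y \<Longrightarrow> \<not> D y x"
    using por unfolding porient_def by blast+
  have ln: "l = n - a" unfolding l_def cs_def n_def by simp
  have csn: "\<And>t. t < l \<Longrightarrow> cs!t = xs!(a+t)" unfolding cs_def l_def using a(1) by simp
  have lastn: "last xs = xs!(n-1)" using xs(3) n_def by (simp add: last_conv_nth)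
  have wk: "\<And>m. Suc m < n \<Longrightarrow> D (xs!m) (xs!Suc m)" using xs(2) n_def unfolding walk_def by blast
  have l3: "3 \<le> l"
  proof (rule ccontr)
    assume "\<not> 3 \<le> l"
    hence "l = 1 \<or> l = 2" using ln a(1) n_def by auto
    thus False
    proof
      assume "l = 1"
      hence "a = n - 1" using ln a(1) n_def by simp
      thus False using a(2) lastn DE Das by metis
    next
      assume "l = 2"
      hence an: "Suc a = n - 1" "Suc a < n" using ln a(1) n_def by auto
      hence "D (xs!a) (last xs)" using wk lastn by metis
      thus False using a(2) Das by blast
    qed
  qed
  have Dc: "\<forall>t < l. D (cs!t) (cs!(Suc t mod l))"
  proof (intro allI impI)
    fix t assume t: "t < l"
    show "D (cs!t) (cs!(Suc t mod l))"
    proof (cases "Suc t < l")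
      case True
      hence "cs!(Suc t mod l) = xs!(Suc (a+t))" using csn by simp
      moreover have "Suc (a + t) < n" using True ln by simp
      ultimately show ?thesis using wk csn[OF t] by simp
    next
      case False
      hence "Suc t = l" using t by simp
      hence at: "a + t = n - 1" using ln by simp
      have "cs!(Suc t mod l) = xs!a" using \<open>Suc t = l\<close> csn l3 by simp
      moreover have "cs!t = last xs" using csn[OF t] at lastn by simp
      ultimately show ?thesis using a(2) by simp
    qed
  qed
  have "is_cycle V E cs"
    unfolding is_cycle_def
  proof (intro conjI)
    show "3 \<le> length cs" using l3 l_def by simp
    show "distinct cs" using xs(1) cs_def by simp
    show "set cs \<subseteq> V" using xs(4) cs_def by (meson in_set_dropD subset_iff)
    show "\<forall>i<length cs. E (cs!i) (cs!(Suc i mod length cs))" using Dc DE l_def by blast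
  qed
  thus ?thesis using Dc cs_def l_def by simp
qed

lemma cyc_vertices:
  assumes "is_cycle V E cs"
  shows "\<Union> (cycle_edges cs) = set cs"
proof
  have l: "0 < length cs" using assms unfolding is_cycle_def by linarith
  show "\<Union> (cycle_edges cs) \<subseteq> set cs" unfolding cycle_edges_def using l by auto
  show "set cs \<subseteq> \<Union> (cycle_edges cs)"
  proof
    fix x assume "x \<in> set cs"
    then obtain i where "i < length cs" "x = cs!i" by (metis in_set_conv_nth)
    thus "x \<in> \<Union> (cycle_edges cs)" unfolding cycle_edges_def by blast
  qed
qed


lemma both_loop_False:
  assumes g: "graph V E" and pf: "pseudoforest V E" and por: "porient E D"
    and e: "E u v" "\<not> D u v" "\<not> D v u"
    and xs: "distinct xs" "walk D xs" "xs \<noteq> []" "hd xs = u" "set xs \<subseteq> V" "a < length xs" "D (last xs) (xs!a)"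
    and ys: "distinct ys" "walk D ys" "ys \<noteq> []" "hd ys = v" "set ys \<subseteq> V" "b < length ys" "D (last ys) (ys!b)"
  shows False
proof -
  have DE: "\<And>x y. D x y \<Longrightarrow> E x y" using por unfolding porient_def by blast
  have s: "\<And>x y. E x y \<Longrightarrow> E y x" using graph_sym[OF g] by blast
  have ir: "\<And>x. \<not> E x x" using graph_irr[OF g] by blast
  have uv: "u \<noteq> v" using e(1) ir by metis
  define R where "R x y \<longleftrightarrow> E x y \<and> x \<in> V \<and> y \<in> V" for x y
  have Rs: "\<And>x y. R x y \<Longrightarrow> R y x" unfolding R_def using s by blast
  have u0: "xs!0 = u" using xs(3,4) by (simp add: hd_conv_nth)
  have v0: "ys!0 = v" using ys(3,4) by (simp add: hd_conv_nth)
  have wR: "walk R zs" if "walk D zs" "set zs \<subseteq> V" for zs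
    using that DE unfolding walk_def R_def by (meson nth_mem subsetD Suc_lessD)
  have uV: "u \<in> V" "v \<in> V" using graph_in[OF g e(1)] by auto
  define cs1 where "cs1 = drop a xs"
  define cs2 where "cs2 = drop b ys"
  have c1: "is_cycle V E cs1" and c1D: "\<forall>t < length cs1. D (cs1!t) (cs1!(Suc t mod length cs1))"
    using loop_cycle[OF por xs(1,2,3,5,6,7)] cs1_def by auto
  have c2: "is_cycle V E cs2" using loop_cycle[OF por ys(1,2,3,5,6,7)] cs2_def by auto
  have h1: "hd cs1 = xs!a" using xs(6) cs1_def by (simp add: hd_drop_conv_nth)
  have h2: "hd cs2 = ys!b" using ys(6) cs2_def by (simp add: hd_drop_conv_nth)
  have r1: "R\<^sup>*\<^sup>* u (xs!a)" using walk_reach[OF wR[OF xs(2,5)], of 0 a] xs(6) u0 by simp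
  have r2: "R\<^sup>*\<^sup>* v (ys!b)" using walk_reach[OF wR[OF ys(2,5)], of 0 b] ys(6) v0 by simp
  have r1': "R\<^sup>*\<^sup>* (xs!a) u" using rt_sym[of R, OF Rs r1] .
  have Ruv: "R u v" using e(1) uV R_def by simp
  have xaV: "xs!a \<in> V" "ys!b \<in> V" using xs(5,6) ys(5,6) by auto
  have "connected_in V E (hd cs1) (hd cs2)"
    unfolding connected_in_def h1 h2 using xaV r1' Ruv r2 R_def[abs_def]
    by (metis (no_types, lifting) rtranclp.rtrancl_into_rtrancl rtranclp_trans)
  hence "cycle_edges cs1 = cycle_edges cs2" using pf c1 c2 unfolding pseudoforest_def by blast
  hence "set cs1 = set cs2" using cyc_vertices[OF c1] cyc_vertices[OF c2] by simp
  hence "ys!b \<in> set xs" using h2 c2 cs1_def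
    by (metis hd_in_set in_set_dropD is_cycle_def list.size(3) not_numeral_le_zero)
  hence ex: "\<exists>j. j < length ys \<and> ys!j \<in> set xs" using ys(6) by blast
  define j where "j = (LEAST j. j < length ys \<and> ys!j \<in> set xs)"
  have j: "j < length ys" "ys!j \<in> set xs" using LeastI_ex[OF ex] j_def by auto
  have jmin: "\<And>j'. j' < j \<Longrightarrow> ys!j' \<notin> set xs"
    using not_less_Least j_def j(1) by (metis less_trans)
  obtain i where i: "i < length xs" "xs!i = ys!j" using j(2) by (metis in_set_conv_nth)
  define f where "f t = (if t \<le> i then xs!t else ys!(i+j-t))" for t
  define NC where "NC = map f [0..<i+j+1]"
  define l where "l = i + j + 1"
  have lNC: "length NC = l" unfolding NC_def l_def by simp
  have NCn: "\<And>t. t < l \<Longrightarrow> NC!t = f t" unfolding NC_def l_def by (simp del: upt_Suc)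
  have wkx: "\<And>m. Suc m < length xs \<Longrightarrow> D (xs!m) (xs!Suc m)" using xs(2) unfolding walk_def by blast
  have wky: "\<And>m. Suc m < length ys \<Longrightarrow> D (ys!m) (ys!Suc m)" using ys(2) unfolding walk_def by blast
  have l3: "3 \<le> l"
  proof (cases "j = 0")
    case True
    hence xv: "xs!i = v" using i v0 by simp
    have "i \<noteq> 0"
    proof
      assume "i = 0" thus False using xv u0 uv by simp
    qed
    moreover have "i \<noteq> 1" using xv u0 e(2) wkx[of 0] i(1) by auto
    ultimately show ?thesis using l_def by simp
  next
    case False
    show ?thesis
    proof (cases "i = 0")
      case True
      hence yu: "ys!j = u" using i u0 by simp
      have "j \<noteq> 1" using yu v0 e(3) wky[of 0] j(1) by auto
      thus ?thesis using False l_def by simp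
    next
      case False2: False
      thus ?thesis using False l_def by simp
    qed
  qed
  have dNC: "distinct NC"
  proof -
    have "inj_on f {0..<i+j+1}"
    proof (rule inj_onI)
      fix t1 t2 assume t: "t1 \<in> {0..<i+j+1}" "t2 \<in> {0..<i+j+1}" "f t1 = f t2"
      have A: "t1 = t2" if "t1 \<le> i" "t2 \<le> i" "f t1 = f t2" for t1 t2
        using that f_def i(1) xs(1) nth_eq_iff_index_eq by fastforce
      have B: "t1 = t2" if "\<not> t1 \<le> i" "\<not> t2 \<le> i" "t1 < i+j+1" "t2 < i+j+1" "f t1 = f t2" for t1 t2
      proof -
        have "i+j-t1 < length ys" "i+j-t2 < length ys" using that j(1) by auto
        hence "i+j-t1 = i+j-t2" using that f_def ys(1) nth_eq_iff_index_eq by fastforce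
        thus ?thesis using that by simp
      qed
      have C: "False" if "t1 \<le> i" "\<not> t2 \<le> i" "t2 < i+j+1" "f t1 = f t2" for t1 t2
      proof -
        have "i+j-t2 < j" using that by simp
        hence "ys!(i+j-t2) \<notin> set xs" using jmin by blast
        moreover have "ys!(i+j-t2) = xs!t1" using that f_def by simp
        ultimately show False using that i(1) by simp
      qed
      show "t1 = t2" using A B C t by (metis atLeastLessThan_iff)
    qed
    thus ?thesis unfolding NC_def by (simp add: distinct_map del: upt_Suc)
  qed
  have fV: "\<And>t. t < l \<Longrightarrow> f t \<in> V"
    using xs(5) ys(5) i(1) j(1) unfolding f_def l_def by (auto simp: subset_iff)
  have sNC: "set NC \<subseteq> V" using fV lNC NCn by (metis in_set_conv_nth subsetI)
  have fj: "\<And>t. i \<le> t \<Longrightarrow> t < l \<Longrightarrow> f t = ys!(i+j-t)"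
    using i(2) unfolding f_def by auto
  have eNC: "\<forall>t < length NC. E (NC!t) (NC!(Suc t mod length NC))"
  proof (intro allI impI)
    fix t assume t: "t < length NC"
    show "E (NC!t) (NC!(Suc t mod length NC))"
    proof (cases "Suc t < l")
      case True
      hence m: "Suc t mod length NC = Suc t" using lNC by simp
      show ?thesis
      proof (cases "t < i")
        case True
        hence "D (xs!t) (xs!Suc t)" using wkx i(1) by simp
        moreover have "NC!t = xs!t" "NC!Suc t = xs!Suc t" using NCn True \<open>Suc t < l\<close> t lNC f_def by auto
        ultimately show ?thesis using m DE by simp
      next
        case False
        define r where "r = i + j - Suc t"
        have rr: "Suc r = i + j - t" "Suc r < length ys" using r_def False \<open>Suc t < l\<close> l_def j(1) by auto
        have "D (ys!r) (ys!Suc r)" using wky rr(2) by blast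
        moreover have "NC!t = ys!Suc r" using NCn t lNC fj False rr(1) by simp
        moreover have "NC!Suc t = ys!r" using NCn \<open>Suc t < l\<close> fj False r_def by simp
        ultimately show ?thesis using m DE s by simp
      qed
    next
      case False
      hence tl: "t = i + j" using t lNC l_def by simp
      hence "Suc t mod length NC = 0" using lNC l_def by simp
      moreover have "NC!0 = u" using NCn l3 f_def u0 by simp
      moreover have "NC!t = v"
      proof (cases "j = 0")
        case True thus ?thesis using NCn t lNC tl f_def i(2) v0 by simp
      next
        case False thus ?thesis using NCn t lNC tl fj[of t] v0 l_def by simp
      qed
      ultimately show ?thesis using s[OF e(1)] by simp
    qed
  qed
  have cNC: "is_cycle V E NC" unfolding is_cycle_def using l3 lNC dNC sNC eNC by simp
  have "{u,v} \<in> cycle_edges NC"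
  proof -
    have "i + j < length NC" using lNC l_def by simp
    moreover have "Suc (i+j) mod length NC = 0" using lNC l_def by simp
    moreover have "NC!0 = u" using NCn l3 f_def u0 by simp
    moreover have "NC!(i+j) = v"
    proof (cases "j = 0")
      case True thus ?thesis using NCn lNC l_def f_def i(2) v0 by simp
    next
      case False thus ?thesis using NCn lNC l_def fj[of "i+j"] v0 by simp
    qed
    ultimately show ?thesis unfolding cycle_edges_def by (metis (mono_tags, lifting) insert_commute mem_Collect_eq)
  qed
  moreover have "{u,v} \<notin> cycle_edges cs1"
  proof
    assume "{u,v} \<in> cycle_edges cs1"
    then obtain t where t: "t < length cs1" "{u,v} = {cs1!t, cs1!(Suc t mod length cs1)}"
      unfolding cycle_edges_def by blast
    have "D (cs1!t) (cs1!(Suc t mod length cs1))" using c1D t(1) by blast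
    thus False using t(2) e(2,3) by (metis doubleton_eq_iff)
  qed
  moreover have "connected_in V E (hd cs1) (hd NC)"
  proof -
    have "NC \<noteq> []" using lNC l3 by auto
    hence "hd NC = NC!0" by (simp add: hd_conv_nth)
    hence "hd NC = u" using NCn l3 f_def u0 by simp
    thus ?thesis unfolding connected_in_def h1 using xaV(1) uV(1) r1' R_def[abs_def] by simp
  qed
  ultimately show False using pf c1 cNC unfolding pseudoforest_def by blast
qed


lemma pf_step:
  assumes g: "graph V E" and pf: "pseudoforest V E" and por: "porient E D"
    and e: "E u v" "\<not> D u v" "\<not> D v u"
  shows "\<exists>D'. porient E D' \<and> (\<forall>x y. D x y \<longrightarrow> D' x y \<or> D' y x) \<and> (D' u v \<or> D' v u)"
proof -
  have DE: "\<And>x y. D x y \<Longrightarrow> E x y" using por unfolding porient_def by blast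
  have s: "\<And>x y. E x y \<Longrightarrow> E y x" using graph_sym[OF g] by blast
  have ir: "\<And>x. \<not> E x x" using graph_irr[OF g] by blast
  have DV: "\<And>x y. D x y \<Longrightarrow> y \<in> V" using DE graph_in[OF g] by blast
  have uV: "u \<in> V" "v \<in> V" using graph_in[OF g e(1)] by auto
  have fin: "finite V" using graph_fin[OF g] .
  obtain xs where xs: "distinct xs" "walk D xs" "xs \<noteq> []" "hd xs = u" "set xs \<subseteq> V"
    "\<forall>y. D (last xs) y \<longrightarrow> y \<in> set xs" by (rule max_dpath[OF fin uV(1) DV])
  obtain ys where ys: "distinct ys" "walk D ys" "ys \<noteq> []" "hd ys = v" "set ys \<subseteq> V"
    "\<forall>y. D (last ys) y \<longrightarrow> y \<in> set ys" by (rule max_dpath[OF fin uV(2) DV])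
  show ?thesis
  proof (cases "\<exists>y. D (last xs) y")
    case False
    hence "\<forall>y. \<not> D (last xs) y" by blast
    thus ?thesis using flip[OF por s ir xs(1-4) _ e] by blast
  next
    case True
    then obtain y where y: "D (last xs) y" by blast
    then obtain a where a: "a < length xs" "y = xs!a" using xs(6) by (metis in_set_conv_nth)
    show ?thesis
    proof (cases "\<exists>y. D (last ys) y")
      case False
      hence "\<forall>y. \<not> D (last ys) y" by blast
      from flip[OF por s ir ys(1-4) this s[OF e(1)] e(3) e(2)]
      show ?thesis by blast
    next
      case True
      then obtain y' where y': "D (last ys) y'" by blast
      then obtain b where b: "b < length ys" "y' = ys!b" using ys(6) by (metis in_set_conv_nth)
      show ?thesis
        using both_loop_False[OF g pf por e xs(1-5) a(1) _ ys(1-5) b(1)] y a y' b by blast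
    qed
  qed
qed

lemma pf_od1:
  assumes g: "graph V E" and pf: "pseudoforest V E"
  shows "\<exists>D. orientation E D \<and> out1 D"
proof -
  have s: "\<And>x y. E x y \<Longrightarrow> E y x" using graph_sym[OF g] by blast
  have fin: "finite V" using graph_fin[OF g] .
  define unc where "unc D = {(x,y). E x y \<and> \<not> D x y \<and> \<not> D y x}" for D :: "'a \<Rightarrow> 'a \<Rightarrow> bool"
  have uncfin: "finite (unc D)" for D
  proof -
    have "unc D \<subseteq> V \<times> V" unfolding unc_def using graph_in[OF g] by auto
    thus ?thesis using fin finite_subset by blast
  qed
  have main: "\<And>n D. card (unc D) = n \<Longrightarrow> porient E D \<Longrightarrow> \<exists>D'. orientation E D' \<and> out1 D'"
  proof -
    fix n
    show "\<And>D. card (unc D) = n \<Longrightarrow> porient E D \<Longrightarrow> \<exists>D'. orientation E D' \<and> out1 D'"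
    proof (induction n rule: less_induct)
      case (less n D)
      show ?case
      proof (cases "unc D = {}")
        case True
        have "orientation E D"
          unfolding orientation_def
        proof (intro conjI allI)
          fix x y
          show "E x y \<longleftrightarrow> D x y \<or> D y x"
            using True less.prems(2) s unfolding unc_def porient_def by blast
          show "D x y \<longrightarrow> \<not> D y x" using less.prems(2) unfolding porient_def by blast
        qed
        thus ?thesis using less.prems(2) unfolding porient_def by blast
      next
        case False
        then obtain u v where uv: "E u v" "\<not> D u v" "\<not> D v u" unfolding unc_def by blast
        obtain D' where D': "porient E D'" "\<forall>x y. D x y \<longrightarrow> D' x y \<or> D' y x" "D' u v \<or> D' v u"
          using pf_step[OF g pf less.prems(2) uv] by blast
        have sub: "unc D' \<subset> unc D"
        proof
          show "unc D' \<subseteq> unc D" unfolding unc_def using D'(2) by blast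
          show "unc D' \<noteq> unc D" using uv D'(3) unfolding unc_def by blast
        qed
        hence "card (unc D') < n" using psubset_card_mono[OF uncfin sub] less.prems(1) by simp
        thus ?thesis using less.IH D'(1) by blast
      qed
    qed
  qed
  have "porient E (\<lambda>x y. False)" unfolding porient_def out1_def by simp
  thus ?thesis using main by blast
qed


lemma opo_swap:
  assumes "one_perfectly_orientable (dprod_V V2 V1) (dprod_E E2 E1)"
  shows "one_perfectly_orientable (dprod_V V1 V2) (dprod_E E1 E2)"
proof -
  obtain D where D: "orientation (dprod_E E2 E1) D" "one_perfect (dprod_E E2 E1) D"
    using assms unfolding one_perfectly_orientable_def by blast
  define D' where "D' p q = D (prod.swap p) (prod.swap q)" for p q
  have sw: "\<And>p q. dprod_E E1 E2 p q = dprod_E E2 E1 (prod.swap p) (prod.swap q)"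
    by (auto simp: dprod_E_def split: prod.splits)
  have "orientation (dprod_E E1 E2) D'"
    using D(1) unfolding orientation_def D'_def sw by blast
  moreover have "one_perfect (dprod_E E1 E2) D'"
    using D(2) unfolding one_perfect_def D'_def sw by (metis swap_swap)
  ultimately show ?thesis unfolding one_perfectly_orientable_def by blast
qed

lemma suff1:
  assumes gG: "graph V1 E1" and lf: "linear_forest 1 V1 E1"
  shows "one_perfectly_orientable (dprod_V V1 V2) (dprod_E E1 E2)"
proof -
  have "\<And>p q. \<not> dprod_E E1 E2 p q" using lf1_edgeless[OF gG lf] by (auto simp: dprod_E_def split: prod.splits)
  hence "orientation (dprod_E E1 E2) (\<lambda>p q. False) \<and> one_perfect (dprod_E E1 E2) (\<lambda>p q. False)"
    unfolding orientation_def one_perfect_def by blast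
  thus ?thesis unfolding one_perfectly_orientable_def by blast
qed

lemma suff2:
  assumes gG: "graph V1 E1" and gH: "graph V2 E2" and lf: "linear_forest 2 V1 E1" and pf: "pseudoforest V2 E2"
  shows "one_perfectly_orientable (dprod_V V1 V2) (dprod_E E1 E2)"
proof -
  obtain DH where DH: "orientation E2 DH" "out1 DH" using pf_od1[OF gH pf] by blast
  define D where "D p q = (E1 (fst p) (fst q) \<and> DH (snd p) (snd q))" for p q
  have dpE: "\<And>p q. dprod_E E1 E2 p q \<longleftrightarrow> E1 (fst p) (fst q) \<and> E2 (snd p) (snd q)"
    by (auto simp: dprod_E_def split: prod.splits)
  have s1: "\<And>x y. E1 x y \<Longrightarrow> E1 y x" using graph_sym[OF gG] by blast
  have "orientation (dprod_E E1 E2) D"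
    unfolding orientation_def dpE D_def using DH(1) s1 unfolding orientation_def by blast
  moreover have "one_perfect (dprod_E E1 E2) D"
    unfolding one_perfect_def
  proof (intro allI impI)
    fix v x y assume a: "D v x \<and> D v y \<and> x \<noteq> y"
    have "fst x = fst y" using lf2_uniq[OF gG lf] a D_def by blast
    moreover have "snd x = snd y" using out1D[OF DH(2)] a D_def by blast
    ultimately show "dprod_E E1 E2 x y" using a prod_eq_iff by blast
  qed
  ultimately show ?thesis unfolding one_perfectly_orientable_def by blast
qed

definition tab :: "nat \<Rightarrow> nat \<Rightarrow> nat \<times> nat" where
  "tab i j = (if i = 0 \<and> j = 0 then (1,1) else if i = 2 \<and> j = 0 then (1,1)
     else if i = 0 \<and> j = 3 then (1,2) else if i = 2 \<and> j = 3 then (1,2)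
     else if i = 1 \<and> j = 1 then (0,2) else if i = 2 \<and> j = 2 then (1,1)
     else if i = 1 \<and> j = 2 then (0,1) else if i = 2 \<and> j = 1 then (1,2)
     else if i = 0 \<and> j = 1 then (1,0) else if i = 1 \<and> j = 0 then (2,1)
     else if i = 0 \<and> j = 2 then (1,3) else if i = 1 \<and> j = 3 then (2,2) else (9,9))"

lemma tab_ok:
  assumes "i < 3" "i' < 3" "j < 4" "j' < 4" "i' = Suc i \<or> i = Suc i'" "j' = Suc j \<or> j = Suc j'"
  shows "(tab i j = (i',j')) \<noteq> (tab i' j' = (i,j))"
proof -
  have "i \<in> {0,1,2}" "j \<in> {0,1,2,3}" using assms(1,3) by auto
  thus ?thesis using assms(2,4,5,6) unfolding tab_def by (elim insertE emptyE; auto)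
qed

lemma suff3:
  assumes gG: "graph V1 E1" and gH: "graph V2 E2" and l3: "linear_forest 3 V1 E1" and l4: "linear_forest 4 V2 E2"
  shows "one_perfectly_orientable (dprod_V V1 V2) (dprod_E E1 E2)"
proof -
  obtain p where p: "(\<forall>u\<in>V1. p u < 3) \<and> (\<forall>u v. E1 u v \<longrightarrow> p v = Suc (p u) \<or> p u = Suc (p v))
     \<and> (\<forall>u v w. E1 u v \<longrightarrow> E1 u w \<longrightarrow> p v = p w \<longrightarrow> v = w)"
    using lf_pos[OF gG l3] by blast
  obtain q where q: "(\<forall>u\<in>V2. q u < 4) \<and> (\<forall>u v. E2 u v \<longrightarrow> q v = Suc (q u) \<or> q u = Suc (q v))
     \<and> (\<forall>u v w. E2 u v \<longrightarrow> E2 u w \<longrightarrow> q v = q w \<longrightarrow> v = w)"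
    using lf_pos[OF gH l4] by blast
  define D where "D x y = (E1 (fst x) (fst y) \<and> E2 (snd x) (snd y) \<and> tab (p (fst x)) (q (snd x)) = (p (fst y), q (snd y)))" for x y
  have dpE: "\<And>x y. dprod_E E1 E2 x y \<longleftrightarrow> E1 (fst x) (fst y) \<and> E2 (snd x) (snd y)"
    by (auto simp: dprod_E_def split: prod.splits)
  have s1: "\<And>x y. E1 x y \<Longrightarrow> E1 y x" using graph_sym[OF gG] by blast
  have s2: "\<And>x y. E2 x y \<Longrightarrow> E2 y x" using graph_sym[OF gH] by blast
  have key: "(tab (p a) (q b) = (p c, q d)) \<noteq> (tab (p c) (q d) = (p a, q b))" if e: "E1 a c" "E2 b d" for a b c d
  proof -
    have "p a < 3" "p c < 3" "q b < 4" "q d < 4" using p q graph_in[OF gG e(1)] graph_in[OF gH e(2)] by auto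
    moreover have "p c = Suc (p a) \<or> p a = Suc (p c)" "q d = Suc (q b) \<or> q b = Suc (q d)" using p q e by blast+
    ultimately show ?thesis using tab_ok by blast
  qed
  have "orientation (dprod_E E1 E2) D"
    unfolding orientation_def
  proof (intro conjI allI impI)
    fix x y
    show "dprod_E E1 E2 x y \<longleftrightarrow> D x y \<or> D y x"
      using key[of "fst x" "fst y" "snd x" "snd y"] s1 s2 unfolding dpE D_def by blast
    show "D x y \<Longrightarrow> \<not> D y x"
      using key[of "fst x" "fst y" "snd x" "snd y"] unfolding D_def by blast
  qed
  moreover have "one_perfect (dprod_E E1 E2) D"
    unfolding one_perfect_def
  proof (intro allI impI)
    fix v x y assume a: "D v x \<and> D v y \<and> x \<noteq> y"
    hence "p (fst x) = p (fst y)" "q (snd x) = q (snd y)" unfolding D_def by auto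
    hence "fst x = fst y" "snd x = snd y" using a p q unfolding D_def by blast+
    thus "dprod_E E1 E2 x y" using a prod_eq_iff by blast
  qed
  ultimately show ?thesis unfolding one_perfectly_orientable_def by blast
qed


lemma walk_nth: "walk E xs \<Longrightarrow> Suc i < length xs \<Longrightarrow> E (xs!i) (xs!Suc i)"
  unfolding walk_def by blast

lemma walk_inV:
  assumes g: "graph V E" and w: "walk E xs" and l: "2 \<le> length xs"
  shows "set xs \<subseteq> V"
proof
  fix x assume "x \<in> set xs"
  then obtain t where t: "t < length xs" "x = xs!t" by (metis in_set_conv_nth)
  show "x \<in> V"
  proof (cases "Suc t < length xs")
    case True thus ?thesis using graph_in[OF g walk_nth[OF w True]] t by simp
  next
    case False
    hence "Suc (t-1) < length xs" "Suc (t-1) = t" using t l by auto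
    thus ?thesis using graph_in[OF g walk_nth[OF w, of "t-1"]] t by simp
  qed
qed

lemma acyc_gap:
  assumes g: "graph V E" and acyc: "\<forall>cs. \<not> is_cycle V E cs" and d: "distinct xs" and w: "walk E xs"
    and i: "i + 2 < length xs"
  shows "\<not> E (xs!i) (xs!(i+2))"
proof
  assume e: "E (xs!i) (xs!(i+2))"
  have "set xs \<subseteq> V" using walk_inV[OF g w] i by simp
  thus False using walk_chord_cycle[OF w d _ _ _ i e, of V] graph_sym[OF g] acyc by auto
qed

lemma lf1_intro:
  assumes g: "graph V E" and ne: "\<forall>a b. \<not> E a b"
  shows "linear_forest 1 V E"
proof (rule lf_intro[OF g])
  show "\<forall>c x y z. E c x \<and> E c y \<and> E c z \<longrightarrow> x = y \<or> y = z \<or> x = z" using ne by blast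
  show "\<forall>cs. \<not> is_cycle V E cs"
  proof (intro allI notI)
    fix cs assume "is_cycle V E cs"
    hence "E (cs!0) (cs!(Suc 0 mod length cs))" by (rule cyc_basic(3)) (use cyc_basic(1)[OF \<open>is_cycle V E cs\<close>] in \<open>cases cs; auto\<close>)
    thus False using ne by blast
  qed
  show "\<forall>xs. distinct xs \<and> walk E xs \<longrightarrow> length xs \<le> 1"
  proof (intro allI impI)
    fix xs assume a: "distinct xs \<and> walk E xs"
    show "length xs \<le> 1"
    proof (rule ccontr)
      assume "\<not> length xs \<le> 1"
      hence "Suc 0 < length xs" by simp
      thus False using walk_nth[of E xs 0] a ne by blast
    qed
  qed
qed simp

lemma lf2_intro:
  assumes g: "graph V E" and u: "\<forall>m x y. E m x \<longrightarrow> E m y \<longrightarrow> x = y"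
  shows "linear_forest 2 V E"
proof (rule lf_intro[OF g])
  have s: "\<And>x y. E x y \<Longrightarrow> E y x" using graph_sym[OF g] by blast
  show "\<forall>c x y z. E c x \<and> E c y \<and> E c z \<longrightarrow> x = y \<or> y = z \<or> x = z" using u by blast
  show "\<forall>cs. \<not> is_cycle V E cs"
  proof (intro allI notI)
    fix cs assume c: "is_cycle V E cs"
    have l: "3 \<le> length cs" "distinct cs" using c unfolding is_cycle_def by auto
    have a1: "E (cs!0) (cs!(Suc 0 mod length cs))" by (rule cyc_basic(3)[OF c]) (use l in \<open>cases cs; auto\<close>)
    have a2: "E (cs!1) (cs!(Suc 1 mod length cs))" by (rule cyc_basic(3)[OF c]) (use l in \<open>cases cs; auto\<close>)
    have m: "Suc 0 mod length cs = 1" "Suc 1 mod length cs = 2" using l by auto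
    have "E (cs!0) (cs!1)" using a1 m(1) by metis
    moreover have "E (cs!1) (cs!2)" using a2 m(2) by metis
    ultimately have "E (cs!1) (cs!0)" "E (cs!1) (cs!2)" using s by auto
    hence "cs!0 = cs!2" using u by blast
    thus False using l nth_eq_iff_index_eq by fastforce
  qed
  show "\<forall>xs. distinct xs \<and> walk E xs \<longrightarrow> length xs \<le> 2"
  proof (intro allI impI)
    fix xs assume a: "distinct xs \<and> walk E xs"
    show "length xs \<le> 2"
    proof (rule ccontr)
      assume "\<not> length xs \<le> 2"
      hence l: "2 < length xs" by simp
      have "E (xs!0) (xs!1)" using walk_nth[of E xs 0] a l by simp
      moreover have "E (xs!1) (xs!2)" using walk_nth[of E xs 1] a l by (simp add: numeral_2_eq_2)
      ultimately have "E (xs!1) (xs!0)" "E (xs!1) (xs!2)" using s by auto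
      hence "xs!0 = xs!2" using u by blast
      thus False using a l nth_eq_iff_index_eq by fastforce
    qed
  qed
qed simp


lemma distinct_nths: "distinct xs \<Longrightarrow> n \<le> length xs \<Longrightarrow> distinct (map (nth xs) [0..<n])"
  by (auto simp: distinct_map inj_on_def nth_eq_iff_index_eq)

lemma map5: "map (nth xs) [0..<5] = [xs!0, xs!1, xs!2, xs!3, xs!4]"
  by (simp add: upt_rec numeral_eq_Suc)

lemma map4: "map (nth xs) [0..<4] = [xs!0, xs!1, xs!2, xs!3]"
  by (simp add: upt_rec numeral_eq_Suc)

lemma opo_obtain:
  assumes "one_perfectly_orientable V E"
  obtains D where "orientation E D" "one_perfect E D"
  using assms unfolding one_perfectly_orientable_def by blast

lemma necessity:
  fixes V1 :: "'a set" and E1 :: "'a \<Rightarrow> 'a \<Rightarrow> bool"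
    and V2 :: "'b set" and E2 :: "'b \<Rightarrow> 'b \<Rightarrow> bool"
  assumes gG: "graph V1 E1" and gH: "graph V2 E2"
    and opo: "one_perfectly_orientable (dprod_V V1 V2) (dprod_E E1 E2)"
  shows "linear_forest 1 V1 E1 \<or> linear_forest 1 V2 E2 \<or>
     (linear_forest 2 V1 E1 \<and> pseudoforest V2 E2) \<or>
     (linear_forest 2 V2 E2 \<and> pseudoforest V1 E1) \<or>
     (linear_forest 3 V1 E1 \<and> linear_forest 4 V2 E2) \<or>
     (linear_forest 3 V2 E2 \<and> linear_forest 4 V1 E1)"
proof -
  obtain D where D: "orientation (dprod_E E1 E2) D" "one_perfect (dprod_E E1 E2) D"
    using opo by (rule opo_obtain)
  have opo2: "one_perfectly_orientable (dprod_V V2 V1) (dprod_E E2 E1)" using opo_swap[OF opo] .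
  obtain D2 where D2: "orientation (dprod_E E2 E1) D2" "one_perfect (dprod_E E2 E1) D2"
    using opo2 by (rule opo_obtain)
  have s1: "\<And>x y. E1 x y \<Longrightarrow> E1 y x" using graph_sym[OF gG] by blast
  have s2: "\<And>x y. E2 x y \<Longrightarrow> E2 y x" using graph_sym[OF gH] by blast
  show ?thesis
  proof (cases "\<exists>a b. E1 a b")
    case False thus ?thesis using lf1_intro[OF gG] by blast
  next
    case hasG: True
    show ?thesis
    proof (cases "\<exists>a b. E2 a b")
      case False thus ?thesis using lf1_intro[OF gH] by blast
    next
      case hasH: True
      have pfH: "pseudoforest V2 E2" using hasG obs_pf[OF gG gH D] by blast
      have pfG: "pseudoforest V1 E1" using hasH obs_pf[OF gH gG D2] by blast
      show ?thesis
      proof (cases "\<forall>m x y. E1 m x \<longrightarrow> E1 m y \<longrightarrow> x = y")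
        case True thus ?thesis using lf2_intro[OF gG] pfH by blast
      next
        case nG: False
        show ?thesis
        proof (cases "\<forall>m x y. E2 m x \<longrightarrow> E2 m y \<longrightarrow> x = y")
          case True thus ?thesis using lf2_intro[OF gH] pfG by blast
        next
          case nH: False
          obtain m1 x1 y1 where p1: "E1 m1 x1" "E1 m1 y1" "x1 \<noteq> y1" using nG by blast
          obtain m2 x2 y2 where p2: "E2 m2 x2" "E2 m2 y2" "x2 \<noteq> y2" using nH by blast
          have ncG: "\<forall>c x y z. E1 c x \<and> E1 c y \<and> E1 c z \<longrightarrow> x = y \<or> y = z \<or> x = z"
          proof (intro allI impI, rule ccontr)
            fix c x y z assume a: "E1 c x \<and> E1 c y \<and> E1 c z" "\<not> (x = y \<or> y = z \<or> x = z)"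
            hence "distinct [x,y,z]" by auto
            thus False using obs_claw[OF gG gH D _ _ _ _ p2] a by blast
          qed
          have ncH: "\<forall>c x y z. E2 c x \<and> E2 c y \<and> E2 c z \<longrightarrow> x = y \<or> y = z \<or> x = z"
          proof (intro allI impI, rule ccontr)
            fix c x y z assume a: "E2 c x \<and> E2 c y \<and> E2 c z" "\<not> (x = y \<or> y = z \<or> x = z)"
            hence "distinct [x,y,z]" by auto
            thus False using obs_claw[OF gH gG D2 _ _ _ _ p1] a by blast
          qed
          have acG: "\<forall>cs. \<not> is_cycle V1 E1 cs" using obs_cycle[OF gG gH D _ p2] by blast
          have acH: "\<forall>cs. \<not> is_cycle V2 E2 cs" using obs_cycle[OF gH gG D2 _ p1] by blast
          have w5: "E (xs!0) (xs!1) \<and> E (xs!1) (xs!2) \<and> E (xs!2) (xs!3) \<and> E (xs!3) (xs!4) \<and>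
              distinct [xs!0, xs!1, xs!2, xs!3, xs!4]"
            if "distinct xs" "walk E xs" "5 \<le> length xs" for E :: "'c \<Rightarrow> 'c \<Rightarrow> bool" and xs
          proof -
            have "E (xs!0) (xs!1)" using walk_nth[OF that(2), of 0] that(3) by simp
            moreover have "E (xs!1) (xs!2)" using walk_nth[OF that(2), of 1] that(3) by (simp add: numeral_2_eq_2)
            moreover have "E (xs!2) (xs!3)" using walk_nth[OF that(2), of 2] that(3) by simp
            moreover have "E (xs!3) (xs!4)" using walk_nth[OF that(2), of 3] that(3) by simp
            moreover have "distinct [xs!0, xs!1, xs!2, xs!3, xs!4]"
              using distinct_nths[OF that(1,3)] map5 by metis
            ultimately show ?thesis by simp
          qed
          have w4: "E (xs!0) (xs!1) \<and> E (xs!1) (xs!2) \<and> E (xs!2) (xs!3) \<and>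
              distinct [xs!0, xs!1, xs!2, xs!3]"
            if "distinct xs" "walk E xs" "4 \<le> length xs" for E :: "'c \<Rightarrow> 'c \<Rightarrow> bool" and xs
          proof -
            have "E (xs!0) (xs!1)" using walk_nth[OF that(2), of 0] that(3) by simp
            moreover have "E (xs!1) (xs!2)" using walk_nth[OF that(2), of 1] that(3) by (simp add: numeral_2_eq_2)
            moreover have "E (xs!2) (xs!3)" using walk_nth[OF that(2), of 2] that(3) by simp
            moreover have "distinct [xs!0, xs!1, xs!2, xs!3]"
              using distinct_nths[OF that(1,3)] map4 by metis
            ultimately show ?thesis by simp
          qed
          have le4G: "\<forall>xs. distinct xs \<and> walk E1 xs \<longrightarrow> length xs \<le> 4"
          proof (intro allI impI, rule ccontr)
            fix xs assume a: "distinct xs \<and> walk E1 xs" "\<not> length xs \<le> 4"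
            hence l: "5 \<le> length xs" by simp
            have gap: "\<not> E1 (xs!1) (xs!3)" using acyc_gap[OF gG acG, of xs 1] a l by (simp add: numeral_eq_Suc)
            have c: "E1 (xs!0) (xs!1)" "E1 (xs!1) (xs!2)" "E1 (xs!2) (xs!3)" "E1 (xs!3) (xs!4)"
              "distinct [xs!0, xs!1, xs!2, xs!3, xs!4]" using w5[of xs E1] a l by blast+
            show False by (rule obs_p5[OF gG gH D c gap p2])
          qed
          have le4H: "\<forall>xs. distinct xs \<and> walk E2 xs \<longrightarrow> length xs \<le> 4"
          proof (intro allI impI, rule ccontr)
            fix xs assume a: "distinct xs \<and> walk E2 xs" "\<not> length xs \<le> 4"
            hence l: "5 \<le> length xs" by simp
            have gap: "\<not> E2 (xs!1) (xs!3)" using acyc_gap[OF gH acH, of xs 1] a l by (simp add: numeral_eq_Suc)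
            have c: "E2 (xs!0) (xs!1)" "E2 (xs!1) (xs!2)" "E2 (xs!2) (xs!3)" "E2 (xs!3) (xs!4)"
              "distinct [xs!0, xs!1, xs!2, xs!3, xs!4]" using w5[of xs E2] a l by blast+
            show False by (rule obs_p5[OF gH gG D2 c gap p1])
          qed
          have le3: "(\<forall>xs. distinct xs \<and> walk E1 xs \<longrightarrow> length xs \<le> 3) \<or>
                     (\<forall>xs. distinct xs \<and> walk E2 xs \<longrightarrow> length xs \<le> 3)"
          proof (rule ccontr)
            assume "\<not> ?thesis"
            then obtain xs ys where xs: "distinct xs" "walk E1 xs" "4 \<le> length xs"
              and ys: "distinct ys" "walk E2 ys" "4 \<le> length ys" by force
            have gap: "\<not> E1 (xs!0) (xs!2)" "\<not> E1 (xs!1) (xs!3)"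
              using acyc_gap[OF gG acG xs(1,2), of 0] acyc_gap[OF gG acG xs(1,2), of 1] xs(3) by (simp_all add: numeral_eq_Suc)
            have c: "E1 (xs!0) (xs!1)" "E1 (xs!1) (xs!2)" "E1 (xs!2) (xs!3)" "distinct [xs!0, xs!1, xs!2, xs!3]"
              using w4[OF xs] by blast+
            have d: "E2 (ys!0) (ys!1)" "E2 (ys!1) (ys!2)" "E2 (ys!2) (ys!3)" "distinct [ys!0, ys!1, ys!2, ys!3]"
              using w4[OF ys] by blast+
            show False by (rule obs_p4[OF gG gH D c gap d])
          qed
          have lf4G: "linear_forest 4 V1 E1" using lf_intro[OF gG _ ncG acG le4G] by simp
          have lf4H: "linear_forest 4 V2 E2" using lf_intro[OF gH _ ncH acH le4H] by simp
          from le3 show ?thesis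
          proof
            assume "\<forall>xs. distinct xs \<and> walk E1 xs \<longrightarrow> length xs \<le> 3"
            hence "linear_forest 3 V1 E1" using lf_intro[OF gG _ ncG acG] by simp
            thus ?thesis using lf4H by blast
          next
            assume "\<forall>xs. distinct xs \<and> walk E2 xs \<longrightarrow> length xs \<le> 3"
            hence "linear_forest 3 V2 E2" using lf_intro[OF gH _ ncH acH] by simp
            thus ?thesis using lf4G by blast
          qed
        qed
      qed
    qed
  qed
qed

theorem theorem11:
  fixes V1 :: "'a set" and E1 :: "'a \<Rightarrow> 'a \<Rightarrow> bool"
    and V2 :: "'b set" and E2 :: "'b \<Rightarrow> 'b \<Rightarrow> bool"
  assumes "graph V1 E1" and "graph V2 E2"
    and "card V1 \<ge> 2" and "card V2 \<ge> 2"
  shows "one_perfectly_orientable (dprod_V V1 V2) (dprod_E E1 E2) \<longleftrightarrow>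
    (linear_forest 1 V1 E1 \<or> linear_forest 1 V2 E2 \<or>
     (linear_forest 2 V1 E1 \<and> pseudoforest V2 E2) \<or>
     (linear_forest 2 V2 E2 \<and> pseudoforest V1 E1) \<or>
     (linear_forest 3 V1 E1 \<and> linear_forest 4 V2 E2) \<or>
     (linear_forest 3 V2 E2 \<and> linear_forest 4 V1 E1))"
proof
  assume "one_perfectly_orientable (dprod_V V1 V2) (dprod_E E1 E2)"
  thus "linear_forest 1 V1 E1 \<or> linear_forest 1 V2 E2 \<or>
     (linear_forest 2 V1 E1 \<and> pseudoforest V2 E2) \<or>
     (linear_forest 2 V2 E2 \<and> pseudoforest V1 E1) \<or>
     (linear_forest 3 V1 E1 \<and> linear_forest 4 V2 E2) \<or>
     (linear_forest 3 V2 E2 \<and> linear_forest 4 V1 E1)"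
    using necessity[OF assms(1,2)] by blast
next
  assume r: "linear_forest 1 V1 E1 \<or> linear_forest 1 V2 E2 \<or>
     (linear_forest 2 V1 E1 \<and> pseudoforest V2 E2) \<or>
     (linear_forest 2 V2 E2 \<and> pseudoforest V1 E1) \<or>
     (linear_forest 3 V1 E1 \<and> linear_forest 4 V2 E2) \<or>
     (linear_forest 3 V2 E2 \<and> linear_forest 4 V1 E1)"
  note gG = assms(1) and gH = assms(2)
  from r show "one_perfectly_orientable (dprod_V V1 V2) (dprod_E E1 E2)"
  proof (elim disjE conjE)
    assume "linear_forest 1 V1 E1" thus ?thesis using suff1[OF gG] by blast
  next
    assume "linear_forest 1 V2 E2" thus ?thesis using opo_swap suff1[OF gH] by blast
  next
    assume "linear_forest 2 V1 E1" "pseudoforest V2 E2" thus ?thesis using suff2[OF gG gH] by blast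
  next
    assume "linear_forest 2 V2 E2" "pseudoforest V1 E1" thus ?thesis using opo_swap suff2[OF gH gG] by blast
  next
    assume "linear_forest 3 V1 E1" "linear_forest 4 V2 E2" thus ?thesis using suff3[OF gG gH] by blast
  next
    assume "linear_forest 3 V2 E2" "linear_forest 4 V1 E1" thus ?thesis using opo_swap suff3[OF gH gG] by blast
  qed
qed


end
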